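(* Let $P(x,y)=\sum_{\ell_1,\ell_2}x^{\ell_1}y^{\ell_2}a_{\ell_1,\ell_2}$ be a slice regular quaternionic polynomial in two variables with coefficients $a_{\ell_1,\ell_2}\in\mathbb{H}$ not all zero. Then $\log|P|$ is integrable on $\mathbb{T}^2(\mathbb{H})$, so $m_{\mathbb{H}}(P)$ exists (as an absolutely convergent improper integral).
   Context: $\mathbb{H}$ denotes the quaternions, $\mathbb{T}^2(\mathbb{H})=\{(x,y)\in\mathbb{H}^2:|x|=|y|=1\}$ with probability Haar measure $\mu$, and $m_{\mathbb{H}}(P)=\int_{\mathbb{T}^2(\mathbb{H})}\log|P(x,y)|\,d\mu$. The polynomial is evaluated with quaternion multiplication in the written order $x^{\ell_1}y^{\ell_2}a_{\ell_1,\ell_2}$. *)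

theory Defs
  imports "HOL-Analysis.Analysis"
begin

text \<open>Quaternions H are modelled as real^4 (components 1,2,3,4 = real, i, j, k parts);
  the quaternion norm |q| is the Euclidean norm.  Hamilton product:\<close>

definition qmult :: "real^4 \<Rightarrow> real^4 \<Rightarrow> real^4" where
  "qmult p q = vector
     [p$1*q$1 - p$2*q$2 - p$3*q$3 - p$4*q$4,
      p$1*q$2 + p$2*q$1 + p$3*q$4 - p$4*q$3,
      p$1*q$3 - p$2*q$4 + p$3*q$1 + p$4*q$2,
      p$1*q$4 + p$2*q$3 - p$3*q$2 + p$4*q$1]"

definition qone :: "real^4" where
  "qone = vector [1, 0, 0, 0]"

definition qpow :: "real^4 \<Rightarrow> nat \<Rightarrow> real^4" where
  "qpow p n = (qmult p ^^ n) qone"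

definition qpoly2 :: "nat \<Rightarrow> (nat \<Rightarrow> nat \<Rightarrow> real^4) \<Rightarrow> real^4 \<Rightarrow> real^4 \<Rightarrow> real^4" where
  "qpoly2 n a x y = (\<Sum>l1\<le>n. \<Sum>l2\<le>n. qmult (qmult (qpow x l1) (qpow y l2)) (a l1 l2))"

text \<open>Normalized uniform (Haar) probability measure on the unit quaternions S^3:
  radial projection of the normalized Lebesgue measure on the unit ball.\<close>

definition sphere_unif :: "(real^4) measure" where
  "sphere_unif = distr (uniform_measure lborel (ball 0 1)) borel (\<lambda>x. x /\<^sub>R norm x)"

definition torusH :: "((real^4) \<times> (real^4)) measure" where
  "torusH = sphere_unif \<Otimes>\<^sub>M sphere_unif"

end

theory Submission
  imports Defs "HOL-Computational_Algebra.Fundamental_Theorem_Algebra"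
begin

definition nL :: "real \<Rightarrow> ennreal" where
  "nL x = (if x = 0 then \<infinity> else ennreal (- ln \<bar>x\<bar>))"

lemma nL_measurable[measurable]: "nL \<in> borel_measurable borel"
  unfolding nL_def by measurable

lemma nL_abs[simp]: "nL \<bar>x\<bar> = nL x"
  by (simp add: nL_def)

lemma ennreal_add_le: "ennreal (a + b) \<le> ennreal a + ennreal b"
  by (auto simp: ennreal_plus_if intro!: ennreal_leI)

lemma nL_mult: "nL (a * b) \<le> nL a + nL b"
proof (cases "a = 0 \<or> b = 0")
  case True then show ?thesis by (auto simp: nL_def)
next
  case False
  then have "nL (a*b) = ennreal (- ln \<bar>a\<bar> + - ln \<bar>b\<bar>)"
    by (simp add: nL_def abs_mult ln_mult)
  also have "\<dots> \<le> ennreal (- ln \<bar>a\<bar>) + ennreal (- ln \<bar>b\<bar>)"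
    by (rule ennreal_add_le)
  finally show ?thesis using False by (simp add: nL_def)
qed

lemma nL_antimono: "\<bar>x\<bar> \<le> \<bar>y\<bar> \<Longrightarrow> nL y \<le> nL x"
  by (auto simp: nL_def intro!: ennreal_leI)

lemma nL_pos: "x \<noteq> 0 \<Longrightarrow> nL x = ennreal (- ln \<bar>x\<bar>)"
  by (simp add: nL_def)

lemma neg_ln_le_powr: assumes "(d::real) > 0" shows "- ln d \<le> 2 * d powr (-1/2)"
proof -
  have "ln (d powr (-1/2)) \<le> d powr (-1/2) - 1"
    by (rule ln_le_minus_one) (use assms in simp)
  moreover have "ln (d powr (-1/2)) = (-1/2) * ln d" using assms by (simp add: ln_powr)
  moreover have "d powr (-1/2) \<ge> 0" by simp
  ultimately show ?thesis by linarith
qed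

lemma int_powr_half: "(\<integral>\<^sup>+x. ennreal (x powr (-1/2)) * indicator {0..3} x \<partial>lborel) = ennreal (2 * sqrt 3)"
proof -
  have "((\<lambda>x::real. x powr (-1/2)) has_integral (3 powr (-1/2+1) / (-1/2+1))) {0..3}"
    by (rule has_integral_powr_from_0) auto
  moreover have "3 powr (-1/2+1) / (-1/2+1) = 2 * sqrt (3::real)"
    by (simp add: powr_half_sqrt[symmetric])
  ultimately have "((\<lambda>x::real. x powr (-1/2)) has_integral (2 * sqrt 3)) {0..3}" by (simp add: mult.commute)
  from nn_integral_has_integral_lebesgue'[OF _ this] show ?thesis by simp
qed

lemma int_abs_powr_half:
  "(\<integral>\<^sup>+x. ennreal (\<bar>x\<bar> powr (-1/2)) * indicator {-3..3} x \<partial>lborel) \<le> ennreal (4 * sqrt 3)"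
proof -
  have "(\<integral>\<^sup>+x. ennreal (\<bar>x\<bar> powr (-1/2)) * indicator {-3..3} x \<partial>lborel) \<le>
        (\<integral>\<^sup>+x. ennreal (x powr (-1/2)) * indicator {0..3} x + ennreal ((-x) powr (-1/2)) * indicator {0..3} (-x) \<partial>lborel)"
    by (intro nn_integral_mono) (auto split: split_indicator)
  also have "\<dots> = (\<integral>\<^sup>+x. ennreal (x powr (-1/2)) * indicator {0..3} x \<partial>lborel) +
        (\<integral>\<^sup>+x. ennreal ((-x) powr (-1/2)) * indicator {0..3} (-x) \<partial>lborel)"
    by (rule nn_integral_add) auto
  also have "(\<integral>\<^sup>+x. ennreal ((-x) powr (-1/2)) * indicator {0..3} (-x) \<partial>lborel)
      = (\<integral>\<^sup>+x. ennreal (x powr (-1/2)) * indicator {0..3} x \<partial>lborel)"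
    using nn_integral_real_affine[of "\<lambda>x. ennreal (x powr (-1/2)) * indicator {0..3} x" "-1" 0]
    by simp
  finally show ?thesis using int_powr_half
    by (simp add: ennreal_plus[symmetric] del: ennreal_plus)
qed

lemma int_shift_powr:
  assumes "\<bar>a\<bar> \<le> 2"
  shows "(\<integral>\<^sup>+y. ennreal (\<bar>y - a\<bar> powr (-1/2)) * indicator {-1..1::real} y \<partial>lborel) \<le> ennreal 8"
proof -
  have "(\<integral>\<^sup>+y. ennreal (\<bar>y - a\<bar> powr (-1/2)) * indicator {-1..1::real} y \<partial>lborel) \<le>
     (\<integral>\<^sup>+y. ennreal (\<bar>y - a\<bar> powr (-1/2)) * indicator {-3..3} (y - a) \<partial>lborel)"
    using assms by (intro nn_integral_mono) (auto split: split_indicator)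
  also have "\<dots> = (\<integral>\<^sup>+x. ennreal (\<bar>x\<bar> powr (-1/2)) * indicator {-3..3} x \<partial>lborel)"
    using nn_integral_real_affine[of "\<lambda>y. ennreal (\<bar>y - a\<bar> powr (-1/2)) * indicator {-3..3} (y - a)" 1 a]
    by simp
  also have "\<dots> \<le> ennreal (4 * sqrt 3)" by (rule int_abs_powr_half)
  also have "\<dots> \<le> ennreal 8"
  proof (rule ennreal_leI)
    have "sqrt 3 \<le> (2::real)" by (rule real_le_lsqrt) auto
    then show "4 * sqrt 3 \<le> (8::real)" by simp
  qed
  finally show ?thesis .
qed

lemma lin_factor_pointwise:
  fixes r :: complex and y :: real
  assumes y: "y \<in> {-1..1}" and ya: "y \<noteq> Re r"
  shows "nL (cmod (of_real y - r) / (1 + cmod r)) \<le>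
    ennreal (ln 3) + (if cmod r < 2 then 2 * ennreal (\<bar>y - Re r\<bar> powr (-1/2)) else 0)"
proof (cases "cmod r < 2")
  case False
  have "cmod (of_real y - r) \<ge> cmod r - cmod (of_real y :: complex)"
    by (metis norm_minus_commute norm_triangle_ineq2)
  moreover have "cmod (of_real y :: complex) \<le> 1" using y by auto
  ultimately have c: "cmod (of_real y - r) \<ge> cmod r - 1" by linarith
  define t where "t = cmod (of_real y - r) / (1 + cmod r)"
  have "t \<ge> 1/3" unfolding t_def using False c by (simp add: field_simps)
  then have tp: "t > 0" by simp
  have "- ln t \<le> - ln (1/3)" using \<open>t \<ge> 1/3\<close> by simp
  also have "- ln (1/3) = ln (3::real)" by (simp add: ln_div)
  finally have "nL t \<le> ennreal (ln 3)" using tp by (simp add: nL_pos ennreal_leI)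
  then show ?thesis using False unfolding t_def by simp
next
  case True
  define d where "d = \<bar>y - Re r\<bar>"
  have dp: "d > 0" using ya unfolding d_def by simp
  have "d \<le> cmod (of_real y - r)" unfolding d_def
    using abs_Re_le_cmod[of "of_real y - r"] by simp
  define t where "t = cmod (of_real y - r) / (1 + cmod r)"
  have "t \<ge> d / 3"
  proof -
    have "cmod (of_real y - r) * (1 + cmod r) \<le> cmod (of_real y - r) * 3"
      using True by (intro mult_left_mono) auto
    then have "cmod (of_real y - r) \<le> 3 * cmod (of_real y - r) / (1 + cmod r)"
      by (subst pos_le_divide_eq) (auto simp: algebra_simps add_pos_nonneg)
    then have "d \<le> 3 * cmod (of_real y - r) / (1 + cmod r)" using \<open>d \<le> _\<close> by linarith
    then show ?thesis unfolding t_def by (simp add: mult.commute[of 3])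
  qed
  then have tp: "t > 0" using dp by simp
  have "- ln t \<le> - ln (d / 3)" using \<open>t \<ge> d/3\<close> dp by simp
  also have "\<dots> = ln 3 - ln d" using dp by (simp add: ln_div)
  also have "\<dots> \<le> ln 3 + 2 * d powr (-1/2)" using neg_ln_le_powr[OF dp] by simp
  finally have "nL t \<le> ennreal (ln 3 + 2 * d powr (-1/2))" using tp by (simp add: nL_pos ennreal_leI del: ennreal_plus)
  also have "\<dots> \<le> ennreal (ln 3) + ennreal (2 * d powr (-1/2))" by (rule ennreal_add_le)
  also have "ennreal (2 * d powr (-1/2)) = 2 * ennreal (d powr (-1/2))"
    by (simp add: ennreal_mult)
  finally show ?thesis using True unfolding t_def d_def by simp
qed

definition C0 :: real where "C0 = 2 * ln 3 + 16"

lemma C0_nonneg: "C0 \<ge> 0" unfolding C0_def by simp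

lemma lin_factor_bound:
  fixes r :: complex
  shows "(\<integral>\<^sup>+y. nL (cmod (of_real y - r) / (1 + cmod r)) * indicator {-1..1::real} y \<partial>lborel) \<le> ennreal C0"
proof -
  let ?g = "\<lambda>y. (ennreal (ln 3) + (if cmod r < 2 then 2 * ennreal (\<bar>y - Re r\<bar> powr (-1/2)) else 0)) * indicator {-1..1::real} y"
  let ?I1 = "(\<integral>\<^sup>+y. ennreal (ln 3) * indicator {-1..1::real} y \<partial>lborel)"
  let ?I2 = "(\<integral>\<^sup>+y. (if cmod r < 2 then 2 * ennreal (\<bar>y - Re r\<bar> powr (-1/2)) else 0) * indicator {-1..1::real} y \<partial>lborel)"
  have A: "(\<integral>\<^sup>+y. nL (cmod (of_real y - r) / (1 + cmod r)) * indicator {-1..1::real} y \<partial>lborel) \<le> (\<integral>\<^sup>+y. ?g y \<partial>lborel)"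
  proof (rule nn_integral_mono_AE)
    show "AE y in lborel. nL (cmod (of_real y - r) / (1 + cmod r)) * indicator {-1..1::real} y \<le> ?g y"
      using AE_lborel_singleton[of "Re r"]
    proof eventually_elim
      case (elim y)
      show ?case
      proof (cases "y \<in> {-1..1}")
        case True
        then show ?thesis using lin_factor_pointwise[OF True elim] by simp
      qed simp
    qed
  qed
  have m1: "(\<lambda>y::real. (if cmod r < 2 then 2 * ennreal (\<bar>y - Re r\<bar> powr (-1/2)) else 0) * indicator {-1..1::real} y) \<in> borel_measurable borel"
    by measurable
  have B: "(\<integral>\<^sup>+y. ?g y \<partial>lborel) = ?I1 + ?I2"
  proof -
    have "(\<integral>\<^sup>+y. ?g y \<partial>lborel) = (\<integral>\<^sup>+y. ennreal (ln 3) * indicator {-1..1::real} y +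
       (if cmod r < 2 then 2 * ennreal (\<bar>y - Re r\<bar> powr (-1/2)) else 0) * indicator {-1..1::real} y \<partial>lborel)"
      by (intro nn_integral_cong) (simp add: distrib_right)
    also have "\<dots> = ?I1 + ?I2"
      by (rule nn_integral_add) (use m1 in auto)
    finally show ?thesis .
  qed
  have C: "?I1 = ennreal (2 * ln 3)"
  proof -
    have "?I1 = ennreal (ln 3) * emeasure lborel {-1..1::real}"
      by (rule nn_integral_cmult_indicator) simp
    moreover have "emeasure lborel {-1..1::real} = 2" using emeasure_lborel_Icc[of "-1" "1::real"] by simp
    ultimately show ?thesis by (simp add: ennreal_mult' mult.commute)
  qed
  have D: "?I2 \<le> ennreal 16"
  proof (cases "cmod r < 2")
    case True
    have "\<bar>Re r\<bar> \<le> 2" using True abs_Re_le_cmod[of r] by linarith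
    have "(\<integral>\<^sup>+y. (2 * ennreal (\<bar>y - Re r\<bar> powr (-1/2))) * indicator {-1..1::real} y \<partial>lborel)
       = 2 * (\<integral>\<^sup>+y. ennreal (\<bar>y - Re r\<bar> powr (-1/2)) * indicator {-1..1::real} y \<partial>lborel)"
      by (subst nn_integral_cmult[symmetric]) (auto simp: mult.assoc)
    also have "\<dots> \<le> 2 * ennreal 8"
      by (intro mult_left_mono int_shift_powr) (use \<open>\<bar>Re r\<bar> \<le> 2\<close> in auto)
    finally show ?thesis using True by (simp add: ennreal_mult[symmetric])
  qed simp
  have "(\<integral>\<^sup>+y. nL (cmod (of_real y - r) / (1 + cmod r)) * indicator {-1..1::real} y \<partial>lborel) \<le> ennreal (2 * ln 3) + ?I2"
    using A B C by simp
  also have "\<dots> \<le> ennreal (2 * ln 3) + ennreal 16" using D by (rule add_left_mono)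
  also have "\<dots> = ennreal C0" unfolding C0_def by (subst ennreal_plus[symmetric]) auto
  finally show ?thesis .
qed

definition Nc :: "complex poly \<Rightarrow> real" where
  "Nc p = (\<Sum>j\<le>degree p. cmod (coeff p j))"

lemma Nc_bound: assumes "degree p \<le> D" shows "Nc p = (\<Sum>j\<le>D. cmod (coeff p j))"
  unfolding Nc_def
  by (rule sum.mono_neutral_left) (use assms in \<open>auto simp: coeff_eq_0\<close>)

lemma Nc_pos: assumes "p \<noteq> 0" shows "Nc p > 0"
proof -
  have "cmod (coeff p (degree p)) > 0" using assms by simp
  also have "cmod (coeff p (degree p)) \<le> Nc p" unfolding Nc_def
    by (rule member_le_sum) auto
  finally show ?thesis .
qed

lemma Nc_smult: "Nc (smult c q) = cmod c * Nc q"
proof -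
  have "Nc (smult c q) = (\<Sum>j\<le>degree q. cmod (coeff (smult c q) j))"
    by (rule Nc_bound) (rule degree_smult_le)
  also have "\<dots> = cmod c * Nc q" by (simp add: Nc_def sum_distrib_left norm_mult)
  finally show ?thesis .
qed

lemma Nc_lin: "Nc ([:-r, 1:] * q) \<le> (1 + cmod r) * Nc q"
proof -
  define D where "D = Suc (degree q)"
  have eq: "[:-r, 1:] * q = smult (-r) q + pCons 0 q"
    by (simp add: mult_pCons_left)
  have dD: "degree ([:-r, 1:] * q) \<le> D" unfolding D_def
    using degree_mult_le[of "[:-r, 1:]" q] by simp
  have "Nc ([:-r, 1:] * q) = (\<Sum>j\<le>D. cmod (coeff ([:-r, 1:] * q) j))" by (rule Nc_bound[OF dD])
  also have "\<dots> \<le> (\<Sum>j\<le>D. cmod (coeff (smult (-r) q) j) + cmod (coeff (pCons 0 q) j))"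
  proof (intro sum_mono)
    fix j
    have "coeff ([:-r,1:]*q) j = coeff (smult (-r) q) j + coeff (pCons 0 q) j"
      by (subst eq) (simp only: coeff_add)
    then show "cmod (coeff ([:-r, 1:] * q) j) \<le> cmod (coeff (smult (-r) q) j) + cmod (coeff (pCons 0 q) j)"
      by (simp only: norm_triangle_ineq)
  qed
  also have "\<dots> = (\<Sum>j\<le>D. cmod (coeff (smult (-r) q) j)) + (\<Sum>j\<le>D. cmod (coeff (pCons 0 q) j))"
    by (rule sum.distrib)
  also have "(\<Sum>j\<le>D. cmod (coeff (smult (-r) q) j)) = Nc (smult (-r) q)"
    by (rule Nc_bound[symmetric]) (use degree_smult_le[of "-r" q] in \<open>simp add: D_def\<close>)
  also have "(\<Sum>j\<le>D. cmod (coeff (pCons 0 q) j)) = Nc q"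
    unfolding D_def Nc_def by (subst sum.atMost_Suc_shift) simp
  finally show ?thesis unfolding Nc_smult by (simp add: algebra_simps)
qed

lemma meas_poly_nL[measurable]:
  "(\<lambda>y::real. nL (cmod (poly p (of_real y)))) \<in> borel_measurable borel"
proof -
  have "(\<lambda>y::real. cmod (poly p (of_real y))) \<in> borel_measurable borel"
    by (intro borel_measurable_continuous_onI continuous_intros)
  then show ?thesis by measurable
qed

lemma meas_lin_nL[measurable]:
  "(\<lambda>y::real. nL (cmod (of_real y - r) / s)) \<in> borel_measurable borel"
proof -
  have "(\<lambda>y::real. cmod (of_real y - r)) \<in> borel_measurable borel"
    by (intro borel_measurable_continuous_onI continuous_intros)
  then show ?thesis by measurable
qed

lemma cpoly_bound:
  fixes p :: "complex poly"
  assumes "p \<noteq> 0"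
  shows "(\<integral>\<^sup>+y. nL (cmod (poly p (of_real y))) * indicator {-1..1::real} y \<partial>lborel)
     \<le> ennreal (C0 * real (degree p)) + 2 * ennreal (- ln (Nc p))"
  using assms
proof (induction "degree p" arbitrary: p)
  case 0
  then obtain c where pc: "p = [:c:]" by (metis degree_eq_zeroE)
  with 0 have c: "c \<noteq> 0" by auto
  have "Nc p = cmod c" using pc by (simp add: Nc_def)
  have "(\<integral>\<^sup>+y. nL (cmod (poly p (of_real y))) * indicator {-1..1::real} y \<partial>lborel)
      = nL (cmod c) * emeasure lborel {-1..1::real}"
    using pc by (simp add: nn_integral_cmult_indicator)
  also have "emeasure lborel {-1..1::real} = 2" using emeasure_lborel_Icc[of "-1" "1::real"] by simp
  finally show ?case using c \<open>Nc p = cmod c\<close> \<open>0 = degree p\<close>[symmetric]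
    by (simp add: nL_pos mult.commute)
next
  case (Suc d p)
  have "\<not> constant (poly p)" using Suc(2) constant_degree[of p] by simp
  then obtain r where "poly p r = 0" using fundamental_theorem_of_algebra by blast
  then obtain q where pq: "p = [:-r, 1:] * q" using poly_eq_0_iff_dvd by (metis dvdE)
  have q0: "q \<noteq> 0" using Suc(3) pq by auto
  have "degree p = degree [:-r,1:] + degree q" unfolding pq by (rule degree_mult_eq) (use q0 in auto)
  then have dq: "degree q = d" using Suc(2) by simp
  define s where "s = 1 + cmod r"
  have s: "s > 0" unfolding s_def by (simp add: add_pos_nonneg)
  define q' where "q' = smult (of_real s) q"
  have q'0: "q' \<noteq> 0" using q0 s unfolding q'_def by simp
  have dq': "d = degree q'" using dq s unfolding q'_def by simp
  have IH: "(\<integral>\<^sup>+y. nL (cmod (poly q' (of_real y))) * indicator {-1..1::real} y \<partial>lborel)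
     \<le> ennreal (C0 * real d) + 2 * ennreal (- ln (Nc q'))"
    using Suc(1)[OF dq' q'0] dq' by simp
  have pw: "nL (cmod (poly p (of_real y))) \<le> nL (cmod (of_real y - r) / s) + nL (cmod (poly q' (of_real y)))" for y :: real
  proof -
    have e1: "poly p (of_real y) = (of_real y - r) * poly q (of_real y)" unfolding pq by (simp add: algebra_simps)
    have e2: "poly q' (of_real y) = of_real s * poly q (of_real y)" unfolding q'_def by simp
    have "cmod (poly p (of_real y)) = (cmod (of_real y - r) / s) * cmod (poly q' (of_real y))"
      using s unfolding e1 e2 by (simp add: norm_mult)
    then show ?thesis using nL_mult[of "cmod (of_real y - r) / s" "cmod (poly q' (of_real y))"] by (simp only:)
  qed
  have "(\<integral>\<^sup>+y. nL (cmod (poly p (of_real y))) * indicator {-1..1::real} y \<partial>lborel)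
     \<le> (\<integral>\<^sup>+y. nL (cmod (of_real y - r) / s) * indicator {-1..1::real} y + nL (cmod (poly q' (of_real y))) * indicator {-1..1::real} y \<partial>lborel)"
    by (intro nn_integral_mono) (auto split: split_indicator intro: pw)
  also have "\<dots> = (\<integral>\<^sup>+y. nL (cmod (of_real y - r) / s) * indicator {-1..1::real} y \<partial>lborel) + (\<integral>\<^sup>+y. nL (cmod (poly q' (of_real y))) * indicator {-1..1::real} y \<partial>lborel)"
    by (rule nn_integral_add) auto
  also have "\<dots> \<le> ennreal C0 + (ennreal (C0 * real d) + 2 * ennreal (- ln (Nc q')))"
    by (intro add_mono IH) (use lin_factor_bound[of r] in \<open>simp add: s_def\<close>)
  also have "\<dots> \<le> ennreal (C0 * real (degree p)) + 2 * ennreal (- ln (Nc p))"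
  proof -
    have "ennreal C0 + ennreal (C0 * real d) = ennreal (C0 * real (degree p))"
      using C0_nonneg Suc(2)[symmetric] by (subst ennreal_plus[symmetric]) (auto simp: algebra_simps)
    moreover have "ennreal (- ln (Nc q')) \<le> ennreal (- ln (Nc p))"
    proof (rule ennreal_leI)
      have "Nc q' = s * Nc q" unfolding q'_def Nc_smult using s by simp
      then have "Nc p \<le> Nc q'" unfolding pq using Nc_lin[of r q] by (simp add: s_def)
      then show "- ln (Nc q') \<le> - ln (Nc p)" using Nc_pos[OF Suc(3)] by simp
    qed
    ultimately show ?thesis by (metis add.assoc add_left_mono mult_left_mono zero_le)
  qed
  finally show ?case .
qed

lemma poly_of_real_map: "poly (map_poly complex_of_real p) (of_real y) = of_real (poly p y)"
proof -
  have d: "degree (map_poly complex_of_real p) = degree p" by (rule degree_map_poly) simp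
  show ?thesis unfolding poly_altdef d by (simp add: coeff_map_poly)
qed

lemma rpoly_bound:
  fixes p :: "real poly"
  assumes "degree p \<le> d"
  shows "(\<integral>\<^sup>+y. nL (poly p y) * indicator {-1..1::real} y \<partial>lborel) \<le> ennreal (C0 * real d) + 2 * nL (coeff p J)"
proof (cases "coeff p J = 0")
  case True
  then show ?thesis by (simp add: nL_def)
next
  case False
  then have p0: "p \<noteq> 0" by auto
  define pc where "pc = map_poly complex_of_real p"
  have dpc: "degree pc = degree p" unfolding pc_def by (rule degree_map_poly) simp
  have pc0: "pc \<noteq> 0" using p0 unfolding pc_def by (simp add: map_poly_eq_0_iff)
  have "(\<integral>\<^sup>+y. nL (poly p y) * indicator {-1..1::real} y \<partial>lborel) = (\<integral>\<^sup>+y. nL (cmod (poly pc (of_real y))) * indicator {-1..1::real} y \<partial>lborel)"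
    unfolding pc_def poly_of_real_map by simp
  also have "\<dots> \<le> ennreal (C0 * real (degree pc)) + 2 * ennreal (- ln (Nc pc))"
    by (rule cpoly_bound[OF pc0])
  also have "\<dots> \<le> ennreal (C0 * real d) + 2 * nL (coeff p J)"
  proof (intro add_mono mult_left_mono)
    show "ennreal (C0 * real (degree pc)) \<le> ennreal (C0 * real d)"
      using assms C0_nonneg dpc by (intro ennreal_leI mult_left_mono) auto
    have "J \<le> degree p" using False le_degree by blast
    have "\<bar>coeff p J\<bar> = cmod (coeff pc J)" unfolding pc_def by (simp add: coeff_map_poly)
    also have "\<dots> \<le> Nc pc" unfolding Nc_def by (rule member_le_sum) (use \<open>J \<le> degree p\<close> dpc in auto)
    finally have "- ln (Nc pc) \<le> - ln \<bar>coeff p J\<bar>" using False by simp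
    then show "ennreal (- ln (Nc pc)) \<le> nL (coeff p J)" using False by (simp add: nL_pos ennreal_leI)
  qed auto
  finally show ?thesis .
qed

inductive polyfun :: "'i set \<Rightarrow> (('i \<Rightarrow> real) \<Rightarrow> real) \<Rightarrow> bool" for I where
  pf_const: "polyfun I (\<lambda>_. c)"
| pf_var: "i \<in> I \<Longrightarrow> polyfun I (\<lambda>f. f i)"
| pf_add: "polyfun I p \<Longrightarrow> polyfun I q \<Longrightarrow> polyfun I (\<lambda>f. p f + q f)"
| pf_mult: "polyfun I p \<Longrightarrow> polyfun I q \<Longrightarrow> polyfun I (\<lambda>f. p f * q f)"

lemma pf_local: "polyfun I q \<Longrightarrow> (\<forall>k\<in>I. f k = g k) \<Longrightarrow> q f = q g"
  by (induction rule: polyfun.induct) auto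

lemma pf_sum: "finite S \<Longrightarrow> (\<And>s. s \<in> S \<Longrightarrow> polyfun I (p s)) \<Longrightarrow> polyfun I (\<lambda>f. \<Sum>s\<in>S. p s f)"
proof (induction S rule: finite_induct)
  case empty then show ?case using pf_const[of I 0] by simp
next
  case (insert x F)
  then show ?case using pf_add[of I "p x" "\<lambda>f. \<Sum>s\<in>F. p s f"] by simp
qed

lemma pf_prod: "finite S \<Longrightarrow> (\<And>s. s \<in> S \<Longrightarrow> polyfun I (p s)) \<Longrightarrow> polyfun I (\<lambda>f. \<Prod>s\<in>S. p s f)"
proof (induction S rule: finite_induct)
  case empty then show ?case using pf_const[of I 1] by simp
next
  case (insert x F)
  then show ?case using pf_mult[of I "p x" "\<lambda>f. \<Prod>s\<in>F. p s f"] by simp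
qed

lemma pf_power: "polyfun I p \<Longrightarrow> polyfun I (\<lambda>f. p f ^ n)"
proof (induction n)
  case 0 then show ?case using pf_const[of I 1] by simp
next
  case (Suc n) then show ?case using pf_mult[of I p "\<lambda>f. p f ^ n"] by simp
qed

lemma pf_minus: "polyfun I p \<Longrightarrow> polyfun I q \<Longrightarrow> polyfun I (\<lambda>f. p f - q f)"
  using pf_add[of I p "\<lambda>f. (-1) * q f"] pf_mult[of I "\<lambda>_. -1" q] pf_const[of I "-1"] by simp

lemma pf_mono: "polyfun I q \<Longrightarrow> I \<subseteq> J \<Longrightarrow> polyfun J q"
  by (induction rule: polyfun.induct) (auto intro: polyfun.intros)

lemma pf_measurable: "polyfun I q \<Longrightarrow> q \<in> borel_measurable (PiM I (\<lambda>_. lborel))"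
  by (induction rule: polyfun.induct) auto

lemma pf_decomp:
  assumes "polyfun (insert i I) q" "i \<notin> I"
  shows "\<exists>Q d. (\<forall>j. polyfun I (\<lambda>f. coeff (Q f) j)) \<and> (\<forall>f. degree (Q f) \<le> d) \<and> (\<forall>f. q f = poly (Q f) (f i))"
  using assms(1)
proof (induction rule: polyfun.induct)
  case (pf_const c)
  have "polyfun I (\<lambda>f. coeff [:c:] j)" for j by (rule pf_const)
  then show ?case by (intro exI[of _ "\<lambda>_. [:c:]"] exI[of _ 0]) auto
next
  case (pf_var k)
  show ?case
  proof (cases "k = i")
    case True
    have "polyfun I (\<lambda>f. coeff [:0,1:] j)" for j by (rule pf_const)
    then show ?thesis using True by (intro exI[of _ "\<lambda>_. [:0,1:]"] exI[of _ 1]) auto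
  next
    case False
    with pf_var have k: "k \<in> I" by auto
    have "polyfun I (\<lambda>f. coeff [:f k:] j)" for j
      by (cases j) (auto intro: polyfun.intros k)
    then show ?thesis by (intro exI[of _ "\<lambda>f. [:f k:]"] exI[of _ 0]) auto
  qed
next
  case (pf_add p q)
  then obtain Q1 d1 Q2 d2 where 1: "\<forall>j. polyfun I (\<lambda>f. coeff (Q1 f) j)" "\<forall>f. degree (Q1 f) \<le> d1" "\<forall>f. p f = poly (Q1 f) (f i)"
    and 2: "\<forall>j. polyfun I (\<lambda>f. coeff (Q2 f) j)" "\<forall>f. degree (Q2 f) \<le> d2" "\<forall>f. q f = poly (Q2 f) (f i)"
    by blast
  show ?case
  proof (intro exI[of _ "\<lambda>f. Q1 f + Q2 f"] exI[of _ "max d1 d2"] conjI allI)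
    fix j show "polyfun I (\<lambda>f. coeff (Q1 f + Q2 f) j)" using 1 2 by (auto intro: polyfun.intros)
  next
    fix f show "degree (Q1 f + Q2 f) \<le> max d1 d2"
      using 1 2 degree_add_le[of "Q1 f" "max d1 d2" "Q2 f"] by (meson le_trans max.cobounded1 max.cobounded2)
  next
    fix f show "p f + q f = poly (Q1 f + Q2 f) (f i)" using 1 2 by simp
  qed
next
  case (pf_mult p q)
  then obtain Q1 d1 Q2 d2 where 1: "\<forall>j. polyfun I (\<lambda>f. coeff (Q1 f) j)" "\<forall>f. degree (Q1 f) \<le> d1" "\<forall>f. p f = poly (Q1 f) (f i)"
    and 2: "\<forall>j. polyfun I (\<lambda>f. coeff (Q2 f) j)" "\<forall>f. degree (Q2 f) \<le> d2" "\<forall>f. q f = poly (Q2 f) (f i)"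
    by blast
  show ?case
  proof (intro exI[of _ "\<lambda>f. Q1 f * Q2 f"] exI[of _ "d1 + d2"] conjI allI)
    fix j show "polyfun I (\<lambda>f. coeff (Q1 f * Q2 f) j)"
      unfolding coeff_mult
    proof (rule pf_sum)
      fix ia
      show "polyfun I (\<lambda>f. coeff (Q1 f) ia * coeff (Q2 f) (j - ia))"
        by (rule polyfun.pf_mult) (use 1(1) 2(1) in auto)
    qed auto
  next
    fix f show "degree (Q1 f * Q2 f) \<le> d1 + d2"
      using 1 2 degree_mult_le[of "Q1 f" "Q2 f"] by (meson add_mono le_trans)
  next
    fix f show "p f * q f = poly (Q1 f * Q2 f) (f i)" using 1 2 by simp
  qed
qed

lemma prod_ind_measurable[measurable]:
  "(\<lambda>f. \<Prod>k\<in>I. indicator {-1..1::real} (f k) :: ennreal) \<in> borel_measurable (PiM J (\<lambda>_. lborel))"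
  if "I \<subseteq> J" for I J :: "'i set"
proof -
  have "\<And>k. k \<in> I \<Longrightarrow> (\<lambda>f. indicator {-1..1::real} (f k) :: ennreal) \<in> borel_measurable (PiM J (\<lambda>_. lborel))"
    apply measurable using that by auto
  then show ?thesis by (rule borel_measurable_prod_ennreal)
qed

lemma meas_rpoly_nL[measurable]:
  "(\<lambda>y::real. nL (poly p y)) \<in> borel_measurable borel"
proof -
  have "(\<lambda>y::real. poly p y) \<in> borel_measurable borel"
    by (intro borel_measurable_continuous_onI continuous_intros)
  then show ?thesis by measurable
qed

lemma main_int:
  assumes "finite I"
  shows "polyfun I q \<Longrightarrow> (\<forall>k\<in>I. f0 k \<in> {-1..1}) \<Longrightarrow> q f0 \<noteq> 0 \<Longrightarrow>
    (\<integral>\<^sup>+f. nL (q f) * (\<Prod>k\<in>I. indicator {-1..1::real} (f k)) \<partial>PiM I (\<lambda>_. lborel)) < \<infinity>"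
  using assms
proof (induction I arbitrary: q f0 rule: finite_induct)
  case empty
  have "q f = q f0" for f using pf_local[OF empty(1)] by auto
  then have u: "q (\<lambda>_. undefined) = q f0" .
  then have "(\<integral>\<^sup>+f. nL (q f) * (\<Prod>k\<in>{}. indicator {-1..1::real} (f k)) \<partial>PiM {} (\<lambda>_. lborel)) = nL (q f0)"
    by (simp add: PiM_empty nn_integral_count_space_finite)
  also have "nL (q f0) < \<infinity>" using empty(3) by (simp add: nL_def)
  finally show ?case .
next
  case (insert i I)
  interpret product_sigma_finite "\<lambda>_. lborel :: real measure" by standard
  obtain Q d where Qc: "\<forall>j. polyfun I (\<lambda>f. coeff (Q f) j)" and Qd: "\<forall>f. degree (Q f) \<le> d"
      and Qq: "\<forall>f. q f = poly (Q f) (f i)"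
    using pf_decomp[OF insert(4) insert(2)] by blast
  have Qloc: "Q (x(i:=y)) = Q x" for x y
  proof (rule poly_eqI)
    fix j show "coeff (Q (x(i := y))) j = coeff (Q x) j"
      using pf_local[OF Qc[rule_format, of j], of "x(i:=y)" x] insert(2) by auto
  qed
  have "Q f0 \<noteq> 0" using insert(6) Qq by auto
  define J where "J = degree (Q f0)"
  define c where "c = (\<lambda>f. coeff (Q f) J)"
  have cf0: "c f0 \<noteq> 0" unfolding c_def J_def using \<open>Q f0 \<noteq> 0\<close> by simp
  have IH: "(\<integral>\<^sup>+f. nL (c f) * (\<Prod>k\<in>I. indicator {-1..1::real} (f k)) \<partial>PiM I (\<lambda>_. lborel)) < \<infinity>"
    using insert(3)[of c f0] Qc cf0 insert(5) unfolding c_def by auto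
  let ?P = "\<lambda>x. (\<Prod>k\<in>I. indicator {-1..1::real} (x k)) :: ennreal"
  have qm: "q \<in> borel_measurable (PiM (insert i I) (\<lambda>_. lborel))" by (rule pf_measurable[OF insert(4)])
  have cm: "c \<in> borel_measurable (PiM I (\<lambda>_. lborel))" unfolding c_def by (rule pf_measurable[OF Qc[rule_format]])
  have "(\<integral>\<^sup>+f. nL (q f) * (\<Prod>k\<in>insert i I. indicator {-1..1::real} (f k)) \<partial>PiM (insert i I) (\<lambda>_. lborel))
     = (\<integral>\<^sup>+x. (\<integral>\<^sup>+y. nL (q (x(i:=y))) * (\<Prod>k\<in>insert i I. indicator {-1..1::real} ((x(i:=y)) k)) \<partial>lborel) \<partial>PiM I (\<lambda>_. lborel))"
    by (rule product_nn_integral_insert) (use insert(1,2) qm in auto)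
  also have "\<dots> = (\<integral>\<^sup>+x. ?P x * (\<integral>\<^sup>+y. nL (poly (Q x) y) * indicator {-1..1::real} y \<partial>lborel) \<partial>PiM I (\<lambda>_. lborel))"
  proof (rule nn_integral_cong)
    fix x
    have "(\<integral>\<^sup>+y. nL (q (x(i:=y))) * (\<Prod>k\<in>insert i I. indicator {-1..1::real} ((x(i:=y)) k)) \<partial>lborel)
        = (\<integral>\<^sup>+y. (nL (poly (Q x) y) * indicator {-1..1::real} y) * ?P x \<partial>lborel)"
    proof (rule nn_integral_cong)
      fix y
      have "(\<Prod>k\<in>I. indicator {-1..1::real} ((x(i:=y)) k)) = ?P x"
        using insert(2) by (intro prod.cong) auto
      then show "nL (q (x(i:=y))) * (\<Prod>k\<in>insert i I. indicator {-1..1::real} ((x(i:=y)) k)) =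
          (nL (poly (Q x) y) * indicator {-1..1::real} y) * ?P x"
        using insert(1,2) Qq Qloc by (simp add: mult.assoc)
    qed
    also have "\<dots> = ?P x * (\<integral>\<^sup>+y. nL (poly (Q x) y) * indicator {-1..1::real} y \<partial>lborel)"
      by (subst nn_integral_multc) (auto simp: mult.commute)
    finally show "(\<integral>\<^sup>+y. nL (q (x(i:=y))) * (\<Prod>k\<in>insert i I. indicator {-1..1::real} ((x(i:=y)) k)) \<partial>lborel)
        = ?P x * (\<integral>\<^sup>+y. nL (poly (Q x) y) * indicator {-1..1::real} y \<partial>lborel)" .
  qed
  also have "\<dots> \<le> (\<integral>\<^sup>+x. ennreal (C0 * real d) * ?P x + 2 * (nL (c x) * ?P x) \<partial>PiM I (\<lambda>_. lborel))"
  proof (rule nn_integral_mono)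
    fix x
    have "?P x * (\<integral>\<^sup>+y. nL (poly (Q x) y) * indicator {-1..1::real} y \<partial>lborel) \<le> ?P x * (ennreal (C0 * real d) + 2 * nL (c x))"
      unfolding c_def by (intro mult_left_mono rpoly_bound) (use Qd in auto)
    then show "?P x * (\<integral>\<^sup>+y. nL (poly (Q x) y) * indicator {-1..1::real} y \<partial>lborel) \<le> ennreal (C0 * real d) * ?P x + 2 * (nL (c x) * ?P x)"
      by (simp add: algebra_simps)
  qed
  also have "\<dots> = ennreal (C0 * real d) * (\<integral>\<^sup>+x. ?P x \<partial>PiM I (\<lambda>_. lborel)) + 2 * (\<integral>\<^sup>+x. nL (c x) * ?P x \<partial>PiM I (\<lambda>_. lborel))"
    using cm by (simp add: nn_integral_add nn_integral_cmult)
  also have "(\<integral>\<^sup>+x. ?P x \<partial>PiM I (\<lambda>_. lborel)) = (\<Prod>k\<in>I. (\<integral>\<^sup>+y. indicator {-1..1::real} y \<partial>lborel))"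
    by (rule product_nn_integral_prod) (use insert(1) in auto)
  also have "\<dots> = (\<Prod>k\<in>I. 2)" by simp
  also have "ennreal (C0 * real d) * (\<Prod>k\<in>I. 2) + 2 * (\<integral>\<^sup>+x. nL (c x) * ?P x \<partial>PiM I (\<lambda>_. lborel)) < \<infinity>"
    using IH by (simp add: ennreal_mult_less_top ennreal_mult_eq_top_iff power_less_top_ennreal)
  finally show ?case .
qed

lemma vector_4 [simp]:
 "(vector [x,y,z,w] ::('a::zero)^4)$1 = x"
 "(vector [x,y,z,w] ::('a::zero)^4)$2 = y"
 "(vector [x,y,z,w] ::('a::zero)^4)$3 = z"
 "(vector [x,y,z,w] ::('a::zero)^4)$4 = w"
  unfolding vector_def by simp_all

lemma qmult_c:
  "qmult p q $ 1 = p$1*q$1 - p$2*q$2 - p$3*q$3 - p$4*q$4"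
  "qmult p q $ 2 = p$1*q$2 + p$2*q$1 + p$3*q$4 - p$4*q$3"
  "qmult p q $ 3 = p$1*q$3 - p$2*q$4 + p$3*q$1 + p$4*q$2"
  "qmult p q $ 4 = p$1*q$4 + p$2*q$3 - p$3*q$2 + p$4*q$1"
  unfolding qmult_def by simp_all

lemma qone_c [simp]: "qone $ 1 = 1" "qone $ 2 = 0" "qone $ 3 = 0" "qone $ 4 = 0"
  unfolding qone_def by simp_all

lemma vec4_eqI: "(x::real^4)$1 = y$1 \<Longrightarrow> x$2 = y$2 \<Longrightarrow> x$3 = y$3 \<Longrightarrow> x$4 = (y$4::real) \<Longrightarrow> x = y"
  by (simp add: vec_eq_iff forall_4)

lemma qmult_add_left: "qmult (p + p') q = qmult p q + qmult p' q"
  by (rule vec4_eqI) (simp_all add: qmult_c algebra_simps)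
lemma qmult_add_right: "qmult q (p + p') = qmult q p + qmult q p'"
  by (rule vec4_eqI) (simp_all add: qmult_c algebra_simps)
lemma qmult_scaleR_left: "qmult (c *\<^sub>R p) q = c *\<^sub>R qmult p q"
  by (rule vec4_eqI) (simp_all add: qmult_c algebra_simps)
lemma qmult_scaleR_right: "qmult q (c *\<^sub>R p) = c *\<^sub>R qmult q p"
  by (rule vec4_eqI) (simp_all add: qmult_c algebra_simps)
lemma qmult_zero_left [simp]: "qmult 0 q = 0"
  by (rule vec4_eqI) (simp_all add: qmult_c)
lemma qmult_zero_right [simp]: "qmult q 0 = 0"
  by (rule vec4_eqI) (simp_all add: qmult_c)

lemma qmult_sum_right: "qmult q (\<Sum>i\<in>S. f i) = (\<Sum>i\<in>S. qmult q (f i))"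
  by (induction S rule: infinite_finite_induct) (auto simp: qmult_add_right)

lemma norm4_sq: "(norm (x::real^4))^2 = x$1^2 + x$2^2 + x$3^2 + x$4^2"
  unfolding power2_norm_eq_inner inner_vec_def sum_4 by (simp add: power2_eq_square)

lemma norm_qmult: "norm (qmult p q) = norm p * norm q"
proof -
  have "(norm (qmult p q))^2 = (norm p * norm q)^2"
    unfolding power_mult_distrib norm4_sq qmult_c by algebra
  then show ?thesis by (simp add: power2_eq_iff_nonneg)
qed

lemma norm_qone [simp]: "norm qone = 1"
  using norm4_sq[of qone] norm_ge_zero[of qone] by (simp add: power2_eq_1_iff)

lemma qpow_0 [simp]: "qpow p 0 = qone" by (simp add: qpow_def)
lemma qpow_Suc: "qpow p (Suc l) = qmult p (qpow p l)" by (simp add: qpow_def)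

lemma norm_qpow: "norm (qpow p l) = norm p ^ l"
  by (induction l) (simp_all add: qpow_Suc norm_qmult)

lemma qpow_scaleR: "qpow (c *\<^sub>R p) l = c ^ l *\<^sub>R qpow p l"
  by (induction l) (simp_all add: qpow_Suc qmult_scaleR_left qmult_scaleR_right)

lemma qpow_zero: "qpow 0 (Suc l) = 0" by (simp add: qpow_Suc)

lemma bilinear_qmult: "bilinear qmult"
  unfolding bilinear_def
  by (auto intro!: linearI simp: qmult_add_left qmult_add_right qmult_scaleR_left qmult_scaleR_right)

lemma bounded_bilinear_qmult: "bounded_bilinear qmult"
  using bilinear_qmult bilinear_conv_bounded_bilinear by blast

lemma continuous_on_qmult [continuous_intros]:
  "continuous_on S f \<Longrightarrow> continuous_on S g \<Longrightarrow> continuous_on S (\<lambda>x. qmult (f x) (g x))"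
  by (rule bounded_bilinear.continuous_on[OF bounded_bilinear_qmult])

lemma continuous_on_qpow [continuous_intros]:
  "continuous_on S f \<Longrightarrow> continuous_on S (\<lambda>x. qpow (f x) l)"
  by (induction l) (auto simp: qpow_Suc intro!: continuous_intros)

lemma continuous_qpoly2: "continuous_on S (\<lambda>p. qpoly2 n a (fst p) (snd p))"
  unfolding qpoly2_def by (intro continuous_intros)

lemma norm_qpoly2_le:
  assumes "norm x \<le> 1" "norm y \<le> 1"
  shows "norm (qpoly2 n a x y) \<le> (\<Sum>l1\<le>n. \<Sum>l2\<le>n. norm (a l1 l2))"
  unfolding qpoly2_def
proof (intro order.trans[OF norm_sum] sum_mono order.trans[OF norm_sum])
  fix l1 l2
  have "norm (qpow x l1) \<le> 1" "norm (qpow y l2) \<le> 1"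
    using assms by (simp_all add: norm_qpow power_le_one)
  then show "norm (qmult (qmult (qpow x l1) (qpow y l2)) (a l1 l2)) \<le> norm (a l1 l2)"
    by (simp add: norm_qmult mult_le_one mult_left_le_one_le)
qed

definition emb :: "complex \<Rightarrow> real^4" where "emb w = vector [Re w, Im w, 0, 0]"
definition qa :: "real^4 \<Rightarrow> complex" where "qa p = Complex (p$1) (p$2)"

lemma emb_c [simp]: "emb w $ 1 = Re w" "emb w $ 2 = Im w" "emb w $ 3 = 0" "emb w $ 4 = 0"
  unfolding emb_def by simp_all

lemma qmult_emb: "qmult (emb u) (emb w) = emb (u * w)"
  by (rule vec4_eqI) (simp_all add: qmult_c)

lemma qone_emb: "qone = emb 1"
  by (rule vec4_eqI) simp_all

lemma qpow_emb: "qpow (emb w) l = emb (w ^ l)"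
  by (induction l) (simp_all add: qone_emb qpow_Suc qmult_emb)

lemma qa_qmult_emb: "qa (qmult (emb w) p) = w * qa p"
  by (simp add: qa_def qmult_c complex_eq_iff)

lemma qa_add: "qa (p + q) = qa p + qa q" by (simp add: qa_def complex_eq_iff)
lemma qa_zero [simp]: "qa 0 = 0" by (simp add: qa_def complex_eq_iff)

lemma qa_sum: "qa (\<Sum>i\<in>S. f i) = (\<Sum>i\<in>S. qa (f i))"
  by (induction S rule: infinite_finite_induct) (auto simp: qa_add)

definition qb :: "real^4 \<Rightarrow> complex" where "qb p = Complex (p$3) (p$4)"

lemma qb_qmult_emb: "qb (qmult (emb w) p) = w * qb p"
  by (simp add: qb_def qmult_c complex_eq_iff)
lemma qb_add: "qb (p + q) = qb p + qb q" by (simp add: qb_def complex_eq_iff)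
lemma qb_zero [simp]: "qb 0 = 0" by (simp add: qb_def complex_eq_iff)
lemma qb_sum: "qb (\<Sum>i\<in>S. f i) = (\<Sum>i\<in>S. qb (f i))"
  by (induction S rule: infinite_finite_induct) (auto simp: qb_add)
lemma qab_zero: "qa p = 0 \<Longrightarrow> qb p = 0 \<Longrightarrow> p = 0"
  by (rule vec4_eqI) (simp_all add: qa_def qb_def complex_eq_iff)

lemma scaleR_emb: "c *\<^sub>R emb w = emb (of_real c * w)"
  by (rule vec4_eqI) simp_all

lemma norm_emb: "norm (emb w) = cmod w"
proof -
  have "(norm (emb w))^2 = (cmod w)^2" unfolding norm4_sq by (simp add: cmod_power2)
  then show ?thesis by (simp add: power2_eq_iff_nonneg)
qed

lemma qa_qpoly2_emb:
  "qa (qpoly2 n a (emb z) (emb w)) = (\<Sum>l1\<le>n. \<Sum>l2\<le>n. z ^ l1 * w ^ l2 * qa (a l1 l2))"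
  unfolding qpoly2_def qa_sum qpow_emb qmult_emb qa_qmult_emb ..

lemma infinite_circle: "infinite (sphere (0::complex) 1)"
proof
  assume f: "finite (sphere (0::complex) 1)"
  have "{-1..1::real} \<subseteq> Re ` sphere 0 1"
  proof
    fix t :: real assume t: "t \<in> {-1..1}"
    then have "\<bar>t\<bar> \<le> 1" by auto
    then have "\<bar>t\<bar>^2 \<le> 1" by (intro power_le_one) auto
    then have "t^2 \<le> 1" by simp
    then have "cmod (Complex t (sqrt (1 - t^2))) = 1" by (simp add: cmod_def)
    then show "t \<in> Re ` sphere 0 1" by (intro image_eqI[of _ _ "Complex t (sqrt (1 - t^2))"]) auto
  qed
  moreover have "finite (Re ` sphere (0::complex) 1)" using f by simp
  ultimately have "finite {-1..1::real}" by (rule finite_subset)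
  then show False using infinite_Icc[of "-1::real" 1] by simp
qed

lemma avoid_finite:
  assumes "finite B" obtains z :: complex where "cmod z = 1" "z \<notin> B"
proof -
  have "infinite (sphere (0::complex) 1 - B)" using infinite_circle assms by (rule Diff_infinite_finite[rotated])
  then obtain z where "z \<in> sphere 0 1 - B" by (metis ex_in_conv finite.emptyI)
  then show ?thesis using that by auto
qed

definition cpol :: "(nat \<Rightarrow> complex) \<Rightarrow> nat \<Rightarrow> complex poly" where
  "cpol c n = (\<Sum>l\<le>n. monom (c l) l)"

lemma poly_cpol: "poly (cpol c n) x = (\<Sum>l\<le>n. c l * x ^ l)"
  by (simp add: cpol_def poly_sum poly_monom)

lemma coeff_cpol: "l \<le> n \<Longrightarrow> coeff (cpol c n) l = c l"
  by (simp add: cpol_def coeff_sum coeff_monom)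

lemma cpol_nz: "l \<le> n \<Longrightarrow> c l \<noteq> 0 \<Longrightarrow> finite {x. poly (cpol c n) x = 0}"
  by (rule poly_roots_finite) (metis coeff_0 coeff_cpol)

lemma cpoly2_nonzero:
  fixes \<gamma> :: "nat \<Rightarrow> nat \<Rightarrow> complex"
  assumes l0: "l0 \<le> n" and m0: "m0 \<le> n" and g: "\<gamma> l0 m0 \<noteq> 0"
  shows "\<exists>z w. cmod z = 1 \<and> cmod w = 1 \<and> (\<forall>\<sigma>\<in>{1,-1}. \<forall>\<tau>\<in>{1,-1}.
      (\<Sum>l1\<le>n. \<Sum>l2\<le>n. (\<sigma> * z) ^ l1 * (\<tau> * w) ^ l2 * \<gamma> l1 l2) \<noteq> 0)"
proof -
  define c where "c = cpol (\<lambda>m. \<gamma> l0 m) n"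
  have fc: "finite {x. poly c x = 0}" unfolding c_def using cpol_nz[OF m0, of "\<lambda>m. \<gamma> l0 m"] g by simp
  have "finite ({x. poly c x = 0} \<union> uminus ` {x. poly c x = 0})" using fc by simp
  then obtain w where w: "cmod w = 1" "w \<notin> {x. poly c x = 0} \<union> uminus ` {x. poly c x = 0}"
    by (rule avoid_finite)
  have cw: "poly c (\<tau> * w) \<noteq> 0" if "\<tau> \<in> {1,-1}" for \<tau> :: complex
    using w(2) that by (auto simp: image_iff; metis minus_minus)
  define H where "H \<tau> = cpol (\<lambda>l. \<Sum>l2\<le>n. (\<tau> * w) ^ l2 * \<gamma> l l2) n" for \<tau> :: complex
  have fH: "finite {x. poly (H \<tau>) x = 0}" if "\<tau> \<in> {1,-1}" for \<tau>
  proof -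
    have "(\<Sum>l2\<le>n. (\<tau> * w) ^ l2 * \<gamma> l0 l2) \<noteq> 0" using cw[OF that] by (simp add: c_def poly_cpol mult.commute)
    then show ?thesis unfolding H_def by (rule cpol_nz[OF l0])
  qed
  define B where "B = (\<Union>\<tau>\<in>{1,-1::complex}. {x. poly (H \<tau>) x = 0} \<union> uminus ` {x. poly (H \<tau>) x = 0})"
  have "finite B" unfolding B_def using fH by auto
  then obtain z where z: "cmod z = 1" "z \<notin> B" by (rule avoid_finite)
  have "(\<Sum>l1\<le>n. \<Sum>l2\<le>n. (\<sigma> * z) ^ l1 * (\<tau> * w) ^ l2 * \<gamma> l1 l2) \<noteq> 0"
    if s: "\<sigma> \<in> {1,-1}" and t: "\<tau> \<in> {1,-1}" for \<sigma> \<tau> :: complex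
  proof -
    have "poly (H \<tau>) (\<sigma> * z) \<noteq> 0" using z(2) s t unfolding B_def by (auto simp: image_iff; metis minus_minus)
    moreover have "poly (H \<tau>) (\<sigma> * z) = (\<Sum>l1\<le>n. \<Sum>l2\<le>n. (\<sigma> * z) ^ l1 * (\<tau> * w) ^ l2 * \<gamma> l1 l2)"
      unfolding H_def poly_cpol by (simp add: sum_distrib_left sum_distrib_right mult.commute mult.left_commute)
    ultimately show ?thesis by simp
  qed
  then show ?thesis using z(1) w(1) by blast
qed

lemma qb_qpoly2_emb:
  "qb (qpoly2 n a (emb z) (emb w)) = (\<Sum>l1\<le>n. \<Sum>l2\<le>n. z ^ l1 * w ^ l2 * qb (a l1 l2))"
  unfolding qpoly2_def qb_sum qpow_emb qmult_emb qb_qmult_emb ..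

lemma nonvanishing_point:
  assumes "\<exists>l1\<le>n. \<exists>l2\<le>n. a l1 l2 \<noteq> 0"
  shows "\<exists>z w. cmod z = 1 \<and> cmod w = 1 \<and> (\<forall>\<sigma>\<in>{1,-1::real}. \<forall>\<tau>\<in>{1,-1::real}.
      qpoly2 n a (\<sigma> *\<^sub>R emb z) (\<tau> *\<^sub>R emb w) \<noteq> 0)"
proof -
  obtain l0 m0 where lm: "l0 \<le> n" "m0 \<le> n" "a l0 m0 \<noteq> 0" using assms by blast
  have sc: "of_real \<sigma> \<in> {1, -1::complex}" if "\<sigma> \<in> {1,-1::real}" for \<sigma> using that by auto
  show ?thesis
  proof (cases "qa (a l0 m0) = 0")
    case False
    from cpoly2_nonzero[OF lm(1,2), of "\<lambda>l m. qa (a l m)"] False obtain z w where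
      zw: "cmod z = 1" "cmod w = 1" "\<forall>\<sigma>\<in>{1,-1}. \<forall>\<tau>\<in>{1,-1}. (\<Sum>l1\<le>n. \<Sum>l2\<le>n. (\<sigma> * z) ^ l1 * (\<tau> * w) ^ l2 * qa (a l1 l2)) \<noteq> 0"
      by blast
    have "qpoly2 n a (\<sigma> *\<^sub>R emb z) (\<tau> *\<^sub>R emb w) \<noteq> 0" if "\<sigma> \<in> {1,-1::real}" "\<tau> \<in> {1,-1::real}" for \<sigma> \<tau>
    proof
      assume "qpoly2 n a (\<sigma> *\<^sub>R emb z) (\<tau> *\<^sub>R emb w) = 0"
      then have "qa (qpoly2 n a (emb (of_real \<sigma> * z)) (emb (of_real \<tau> * w))) = 0" by (simp add: scaleR_emb)
      then show False using zw(3) sc[OF that(1)] sc[OF that(2)] unfolding qa_qpoly2_emb by blast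
    qed
    then show ?thesis using zw(1,2) by blast
  next
    case True
    then have "qb (a l0 m0) \<noteq> 0" using lm(3) qab_zero by blast
    from cpoly2_nonzero[OF lm(1,2), of "\<lambda>l m. qb (a l m)"] this obtain z w where
      zw: "cmod z = 1" "cmod w = 1" "\<forall>\<sigma>\<in>{1,-1}. \<forall>\<tau>\<in>{1,-1}. (\<Sum>l1\<le>n. \<Sum>l2\<le>n. (\<sigma> * z) ^ l1 * (\<tau> * w) ^ l2 * qb (a l1 l2)) \<noteq> 0"
      by blast
    have "qpoly2 n a (\<sigma> *\<^sub>R emb z) (\<tau> *\<^sub>R emb w) \<noteq> 0" if "\<sigma> \<in> {1,-1::real}" "\<tau> \<in> {1,-1::real}" for \<sigma> \<tau>
    proof
      assume "qpoly2 n a (\<sigma> *\<^sub>R emb z) (\<tau> *\<^sub>R emb w) = 0"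
      then have "qb (qpoly2 n a (emb (of_real \<sigma> * z)) (emb (of_real \<tau> * w))) = 0" by (simp add: scaleR_emb)
      then show False using zw(3) sc[OF that(1)] sc[OF that(2)] unfolding qb_qpoly2_emb by blast
    qed
    then show ?thesis using zw(1,2) by blast
  qed
qed

type_synonym qq = "(real^4) \<times> (real^4)"

definition qpf :: "'i set \<Rightarrow> (('i \<Rightarrow> real) \<Rightarrow> real^4) \<Rightarrow> bool" where
  "qpf I F \<longleftrightarrow> (\<forall>k. polyfun I (\<lambda>e. F e $ k))"

lemma qpf_const: "qpf I (\<lambda>_. c)" unfolding qpf_def by (auto intro: pf_const)

lemma qpf_qmult: assumes "qpf I F" "qpf I G" shows "qpf I (\<lambda>e. qmult (F e) (G e))"
proof -
  have h: "polyfun I (\<lambda>e. F e $ k)" "polyfun I (\<lambda>e. G e $ k)" for k using assms unfolding qpf_def by auto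
  have m: "polyfun I (\<lambda>e. F e $ i * G e $ j)" for i j using h by (intro pf_mult)
  show ?thesis unfolding qpf_def
  proof
    fix k :: 4
    show "polyfun I (\<lambda>e. qmult (F e) (G e) $ k)"
      using exhaust_4[of k] by (auto simp: qmult_c intro!: pf_add pf_minus m)
  qed
qed

lemma qpf_qpow: "qpf I F \<Longrightarrow> qpf I (\<lambda>e. qpow (F e) l)"
  by (induction l) (auto simp: qpow_Suc qpf_const intro: qpf_qmult)

lemma qpf_scaleR: "polyfun I g \<Longrightarrow> qpf I F \<Longrightarrow> qpf I (\<lambda>e. g e *\<^sub>R F e)"
  unfolding qpf_def by (auto intro: pf_mult)

lemma qpf_sum: "finite S \<Longrightarrow> (\<And>s. s \<in> S \<Longrightarrow> qpf I (F s)) \<Longrightarrow> qpf I (\<lambda>e. \<Sum>s\<in>S. F s e)"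
  unfolding qpf_def by (auto intro!: pf_sum)

lemma pf_normsq: "qpf I F \<Longrightarrow> polyfun I (\<lambda>e. (norm (F e))^2)"
  unfolding qpf_def norm4_sq by (intro pf_add pf_power) auto

definition cU :: "(qq \<Rightarrow> real) \<Rightarrow> real^4" where "cU w = (\<chi> k. w (axis k 1, 0))"
definition cV :: "(qq \<Rightarrow> real) \<Rightarrow> real^4" where "cV w = (\<chi> k. w (0, axis k 1))"

lemma axis_basis: "(axis k 1 :: real^4) \<in> Basis"
  unfolding Basis_vec_def by auto

lemma basis_U: "((axis k 1, 0) :: qq) \<in> Basis" and basis_V: "((0, axis k 1) :: qq) \<in> Basis"
  unfolding Basis_prod_def using axis_basis by auto

lemma qpf_cU: "Inl ` (Basis::qq set) \<subseteq> I \<Longrightarrow> qpf I (\<lambda>e. cU (e \<circ> Inl))"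
  unfolding qpf_def cU_def using basis_U by (auto intro!: pf_var)
lemma qpf_cV: "Inl ` (Basis::qq set) \<subseteq> I \<Longrightarrow> qpf I (\<lambda>e. cV (e \<circ> Inl))"
  unfolding qpf_def cV_def using basis_V by (auto intro!: pf_var)

lemma qpf_cU': "qpf (Basis::qq set) cU"
  unfolding qpf_def cU_def using basis_U by (auto intro!: pf_var)
lemma qpf_cV': "qpf (Basis::qq set) cV"
  unfolding qpf_def cV_def using basis_V by (auto intro!: pf_var)

definition ext :: "(qq \<Rightarrow> real) \<Rightarrow> real \<Rightarrow> real \<Rightarrow> (qq + bool \<Rightarrow> real)" where
  "ext w r s = case_sum w (\<lambda>b. if b then s else r)"

definition IPhi :: "(qq + bool) set" where "IPhi = Inl ` Basis \<union> {Inr False, Inr True}"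

definition Phi :: "nat \<Rightarrow> (nat \<Rightarrow> nat \<Rightarrow> real^4) \<Rightarrow> (qq + bool \<Rightarrow> real) \<Rightarrow> real" where
  "Phi n a e = (norm (\<Sum>l1\<le>n. \<Sum>l2\<le>n. (e (Inr False) ^ (2*n - l1) * e (Inr True) ^ (2*n - l2)) *\<^sub>R
      qmult (qmult (qpow (cU (e \<circ> Inl)) l1) (qpow (cV (e \<circ> Inl)) l2)) (a l1 l2)))^2"

lemma pf_Phi: "polyfun IPhi (Phi n a)"
proof -
  have U: "qpf IPhi (\<lambda>e. cU (e \<circ> Inl))" and V: "qpf IPhi (\<lambda>e. cV (e \<circ> Inl))"
    by (auto intro!: qpf_cU qpf_cV simp: IPhi_def)
  have r: "polyfun IPhi (\<lambda>e. e (Inr False))" "polyfun IPhi (\<lambda>e. e (Inr True))"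
    by (auto intro!: pf_var simp: IPhi_def)
  show ?thesis unfolding Phi_def
    by (intro pf_normsq qpf_sum qpf_scaleR pf_mult pf_power r qpf_qmult qpf_qpow U V qpf_const) auto
qed

lemma mult_rep:
  fixes a00 a10 a01 a11 b00 b10 b01 b11 \<sigma> \<tau> r s R1 R2 :: real
  assumes "\<sigma>^2 = 1" "\<tau>^2 = 1" "r^2 = R1" "s^2 = R2"
  shows "(a00 + \<sigma>*r*a10 + \<tau>* s*a01 + \<sigma>*\<tau>*r* s*a11) * (b00 + \<sigma>*r*b10 + \<tau>* s*b01 + \<sigma>*\<tau>*r* s*b11) =
    (a00*b00 + R1*a10*b10 + R2*a01*b01 + R1*R2*a11*b11) + \<sigma>*r*(a00*b10 + a10*b00 + R2*(a01*b11 + a11*b01))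
    + \<tau>* s*(a00*b01 + a01*b00 + R1*(a10*b11 + a11*b10)) + \<sigma>*\<tau>*r* s*(a00*b11 + a11*b00 + a10*b01 + a01*b10)"
  using assms by algebra

lemma pf_rep:
  fixes \<rho>1 \<rho>2 :: "(qq \<Rightarrow> real) \<Rightarrow> real"
  assumes "polyfun IPhi \<Phi>" "polyfun Basis R1" "polyfun Basis R2" "\<And>w. \<rho>1 w ^ 2 = R1 w" "\<And>w. \<rho>2 w ^ 2 = R2 w"
  shows "\<exists>p00 p10 p01 p11. polyfun Basis p00 \<and> polyfun Basis p10 \<and> polyfun Basis p01 \<and> polyfun Basis p11 \<and>
   (\<forall>w \<sigma> \<tau>. \<sigma>^2 = 1 \<longrightarrow> \<tau>^2 = 1 \<longrightarrow> \<Phi> (ext w (\<sigma> * \<rho>1 w) (\<tau> * \<rho>2 w)) =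
      p00 w + \<sigma> * \<rho>1 w * p10 w + \<tau> * \<rho>2 w * p01 w + \<sigma> * \<tau> * \<rho>1 w * \<rho>2 w * p11 w)"
  using assms(1)
proof (induction rule: polyfun.induct)
  case (pf_const c)
  show ?case by (rule exI[of _ "\<lambda>_. c"], rule exI[of _ "\<lambda>_. 0"], rule exI[of _ "\<lambda>_. 0"], rule exI[of _ "\<lambda>_. 0"])
    (auto intro: polyfun.pf_const)
next
  case (pf_var i)
  then consider b where "i = Inl b" "b \<in> Basis" | "i = Inr False" | "i = Inr True" unfolding IPhi_def by auto
  then show ?case
  proof cases
    case 1 then show ?thesis
      by (intro exI[of _ "\<lambda>w. w b"] exI[of _ "\<lambda>_. 0"]) (auto simp: ext_def intro: polyfun.intros)
  next
    case 2 then show ?thesis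
      by (intro exI[of _ "\<lambda>_. 0"] exI[of _ "\<lambda>_. 1"] exI[of _ "\<lambda>_. 0"] exI[of _ "\<lambda>_. 0"]) (auto simp: ext_def intro: polyfun.intros)
  next
    case 3 then show ?thesis
      by (intro exI[of _ "\<lambda>_. 0"] exI[of _ "\<lambda>_. 0"] exI[of _ "\<lambda>_. 1"] exI[of _ "\<lambda>_. 0"]) (auto simp: ext_def intro: polyfun.intros)
  qed
next
  case (pf_add p q)
  from pf_add.IH obtain a00 a10 a01 a11 b00 b10 b01 b11 where
    A: "polyfun Basis a00" "polyfun Basis a10" "polyfun Basis a01" "polyfun Basis a11"
       "\<forall>w \<sigma> \<tau>. \<sigma>^2 = 1 \<longrightarrow> \<tau>^2 = 1 \<longrightarrow> p (ext w (\<sigma> * \<rho>1 w) (\<tau> * \<rho>2 w)) =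
      a00 w + \<sigma> * \<rho>1 w * a10 w + \<tau> * \<rho>2 w * a01 w + \<sigma> * \<tau> * \<rho>1 w * \<rho>2 w * a11 w" and
    B: "polyfun Basis b00" "polyfun Basis b10" "polyfun Basis b01" "polyfun Basis b11"
       "\<forall>w \<sigma> \<tau>. \<sigma>^2 = 1 \<longrightarrow> \<tau>^2 = 1 \<longrightarrow> q (ext w (\<sigma> * \<rho>1 w) (\<tau> * \<rho>2 w)) =
      b00 w + \<sigma> * \<rho>1 w * b10 w + \<tau> * \<rho>2 w * b01 w + \<sigma> * \<tau> * \<rho>1 w * \<rho>2 w * b11 w"
    by blast
  show ?case
    by (rule exI[of _ "\<lambda>w. a00 w + b00 w"], rule exI[of _ "\<lambda>w. a10 w + b10 w"],
        rule exI[of _ "\<lambda>w. a01 w + b01 w"], rule exI[of _ "\<lambda>w. a11 w + b11 w"])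
       (use A B in \<open>auto intro: polyfun.pf_add simp: algebra_simps\<close>)
next
  case (pf_mult p q)
  from pf_mult.IH obtain a00 a10 a01 a11 b00 b10 b01 b11 where
    A: "polyfun Basis a00" "polyfun Basis a10" "polyfun Basis a01" "polyfun Basis a11"
       "\<forall>w \<sigma> \<tau>. \<sigma>^2 = 1 \<longrightarrow> \<tau>^2 = 1 \<longrightarrow> p (ext w (\<sigma> * \<rho>1 w) (\<tau> * \<rho>2 w)) =
      a00 w + \<sigma> * \<rho>1 w * a10 w + \<tau> * \<rho>2 w * a01 w + \<sigma> * \<tau> * \<rho>1 w * \<rho>2 w * a11 w" and
    B: "polyfun Basis b00" "polyfun Basis b10" "polyfun Basis b01" "polyfun Basis b11"
       "\<forall>w \<sigma> \<tau>. \<sigma>^2 = 1 \<longrightarrow> \<tau>^2 = 1 \<longrightarrow> q (ext w (\<sigma> * \<rho>1 w) (\<tau> * \<rho>2 w)) =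
      b00 w + \<sigma> * \<rho>1 w * b10 w + \<tau> * \<rho>2 w * b01 w + \<sigma> * \<tau> * \<rho>1 w * \<rho>2 w * b11 w"
    by blast
  note pfs = A(1-4) B(1-4) assms(2,3)
  show ?case
  proof (rule exI[of _ "\<lambda>w. a00 w*b00 w + R1 w*a10 w*b10 w + R2 w*a01 w*b01 w + R1 w*R2 w*a11 w*b11 w"],
      rule exI[of _ "\<lambda>w. a00 w*b10 w + a10 w*b00 w + R2 w*(a01 w*b11 w + a11 w*b01 w)"],
      rule exI[of _ "\<lambda>w. a00 w*b01 w + a01 w*b00 w + R1 w*(a10 w*b11 w + a11 w*b10 w)"],
      rule exI[of _ "\<lambda>w. a00 w*b11 w + a11 w*b00 w + a10 w*b01 w + a01 w*b10 w"], intro conjI allI impI)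
    show "polyfun Basis (\<lambda>w. a00 w*b00 w + R1 w*a10 w*b10 w + R2 w*a01 w*b01 w + R1 w*R2 w*a11 w*b11 w)"
      using pfs by (intro polyfun.pf_add polyfun.pf_mult)
    show "polyfun Basis (\<lambda>w. a00 w*b10 w + a10 w*b00 w + R2 w*(a01 w*b11 w + a11 w*b01 w))"
      using pfs by (intro polyfun.pf_add polyfun.pf_mult)
    show "polyfun Basis (\<lambda>w. a00 w*b01 w + a01 w*b00 w + R1 w*(a10 w*b11 w + a11 w*b10 w))"
      using pfs by (intro polyfun.pf_add polyfun.pf_mult)
    show "polyfun Basis (\<lambda>w. a00 w*b11 w + a11 w*b00 w + a10 w*b01 w + a01 w*b10 w)"
      using pfs by (intro polyfun.pf_add polyfun.pf_mult)
  next
    fix w and \<sigma> \<tau> :: real assume st: "\<sigma>^2 = 1" "\<tau>^2 = 1"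
    show "p (ext w (\<sigma> * \<rho>1 w) (\<tau> * \<rho>2 w)) * q (ext w (\<sigma> * \<rho>1 w) (\<tau> * \<rho>2 w)) =
      (a00 w*b00 w + R1 w*a10 w*b10 w + R2 w*a01 w*b01 w + R1 w*R2 w*a11 w*b11 w) + \<sigma> * \<rho>1 w * (a00 w*b10 w + a10 w*b00 w + R2 w*(a01 w*b11 w + a11 w*b01 w))
      + \<tau> * \<rho>2 w * (a00 w*b01 w + a01 w*b00 w + R1 w*(a10 w*b11 w + a11 w*b10 w)) + \<sigma> * \<tau> * \<rho>1 w * \<rho>2 w * (a00 w*b11 w + a11 w*b00 w + a10 w*b01 w + a01 w*b10 w)"
    proof -
      have "p (ext w (\<sigma> * \<rho>1 w) (\<tau> * \<rho>2 w)) * q (ext w (\<sigma> * \<rho>1 w) (\<tau> * \<rho>2 w)) =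
        (a00 w + \<sigma>*\<rho>1 w*a10 w + \<tau>*\<rho>2 w*a01 w + \<sigma>*\<tau>*\<rho>1 w*\<rho>2 w*a11 w) *
        (b00 w + \<sigma>*\<rho>1 w*b10 w + \<tau>*\<rho>2 w*b01 w + \<sigma>*\<tau>*\<rho>1 w*\<rho>2 w*b11 w)"
        using A(5) B(5) st by (simp only:)
      also note mult_rep[OF st assms(4)[of w] assms(5)[of w]]
      finally show ?thesis .
    qed
  qed
qed

lemma prod4:
  fixes p00 p10 p01 p11 r s R1 R2 :: real
  assumes "r^2 = R1" "s^2 = R2"
  shows "(p00 + r*p10 + s*p01 + r* s*p11) * (p00 - r*p10 + s*p01 - r* s*p11) *
         (p00 + r*p10 - s*p01 - r* s*p11) * (p00 - r*p10 - s*p01 + r* s*p11) =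
         (p00^2 + R2*p01^2 - R1*(p10^2 + R2*p11^2))^2 - R2*(2*(p00*p01 - R1*p10*p11))^2"
  unfolding assms[symmetric] by algebra

definition rho1 :: "(qq \<Rightarrow> real) \<Rightarrow> real" where "rho1 w = norm (cU w)"
definition rho2 :: "(qq \<Rightarrow> real) \<Rightarrow> real" where "rho2 w = norm (cV w)"

lemma exists_q:
  "\<exists>q. polyfun Basis q \<and> (\<forall>w. q w =
     Phi n a (ext w (rho1 w) (rho2 w)) * Phi n a (ext w (- rho1 w) (rho2 w)) *
     Phi n a (ext w (rho1 w) (- rho2 w)) * Phi n a (ext w (- rho1 w) (- rho2 w)))"
proof -
  have R1: "polyfun Basis (\<lambda>w. (norm (cU w))^2)" by (rule pf_normsq[OF qpf_cU'])
  have R2: "polyfun Basis (\<lambda>w. (norm (cV w))^2)" by (rule pf_normsq[OF qpf_cV'])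
  obtain p00 p10 p01 p11 where P: "polyfun Basis p00" "polyfun Basis p10" "polyfun Basis p01" "polyfun Basis p11"
    "\<forall>w \<sigma> \<tau>. \<sigma>^2 = 1 \<longrightarrow> \<tau>^2 = 1 \<longrightarrow> Phi n a (ext w (\<sigma> * rho1 w) (\<tau> * rho2 w)) =
      p00 w + \<sigma> * rho1 w * p10 w + \<tau> * rho2 w * p01 w + \<sigma> * \<tau> * rho1 w * rho2 w * p11 w"
  proof -
    have r1: "\<And>w. rho1 w ^ 2 = (norm (cU w))^2" and r2: "\<And>w. rho2 w ^ 2 = (norm (cV w))^2"
      by (simp_all add: rho1_def rho2_def)
    show ?thesis using pf_rep[OF pf_Phi[of n a] R1 R2 r1 r2] that by blast
  qed
  define S1 where "S1 w = (norm (cU w))^2" for w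
  define S2 where "S2 w = (norm (cV w))^2" for w
  have S1: "polyfun Basis S1" and S2: "polyfun Basis S2" using R1 R2 unfolding S1_def S2_def by auto
  define q where "q w = (p00 w^2 + S2 w*p01 w^2 - S1 w*(p10 w^2 + S2 w*p11 w^2))^2
     - S2 w*(2*(p00 w*p01 w - S1 w*p10 w*p11 w))^2" for w
  have "polyfun Basis q" unfolding q_def
    using P(1-4) S1 S2 by (intro pf_minus pf_mult pf_power pf_add pf_const) 
  moreover have "q w =
     Phi n a (ext w (rho1 w) (rho2 w)) * Phi n a (ext w (- rho1 w) (rho2 w)) *
     Phi n a (ext w (rho1 w) (- rho2 w)) * Phi n a (ext w (- rho1 w) (- rho2 w))" for w
  proof -
    have e: "Phi n a (ext w (\<sigma> * rho1 w) (\<tau> * rho2 w)) =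
      p00 w + \<sigma> * rho1 w * p10 w + \<tau> * rho2 w * p01 w + \<sigma> * \<tau> * rho1 w * rho2 w * p11 w"
      if "\<sigma>^2 = 1" "\<tau>^2 = 1" for \<sigma> \<tau> :: real using P(5) that by blast
    have "q w = (p00 w + rho1 w*p10 w + rho2 w*p01 w + rho1 w*rho2 w*p11 w) * (p00 w - rho1 w*p10 w + rho2 w*p01 w - rho1 w*rho2 w*p11 w) *
         (p00 w + rho1 w*p10 w - rho2 w*p01 w - rho1 w*rho2 w*p11 w) * (p00 w - rho1 w*p10 w - rho2 w*p01 w + rho1 w*rho2 w*p11 w)"
      unfolding q_def by (rule prod4[symmetric]) (simp_all add: rho1_def rho2_def S1_def S2_def)
    also have "\<dots> = Phi n a (ext w (1 * rho1 w) (1 * rho2 w)) * Phi n a (ext w ((-1) * rho1 w) (1 * rho2 w)) *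
     Phi n a (ext w (1 * rho1 w) ((-1) * rho2 w)) * Phi n a (ext w ((-1) * rho1 w) ((-1) * rho2 w))"
      by (subst (1 2 3 4) e) (simp_all add: algebra_simps)
    finally show ?thesis by simp
  qed
  ultimately show ?thesis by blast
qed

lemma ext_simps [simp]: "ext w r s \<circ> Inl = w" "ext w r s (Inr False) = r" "ext w r s (Inr True) = s"
  by (auto simp: ext_def)

lemma sigma_pow: assumes "(\<sigma>::real)^2 = 1" "l \<le> 2*n" shows "\<sigma>^(2*n - l) = \<sigma>^l"
proof -
  have "\<sigma>^(2*n-l) = \<sigma>^(2*n-l) * (\<sigma>^2)^l" using assms by simp
  also have "\<dots> = \<sigma>^(2*n + l)" using assms(2) by (simp add: power_add[symmetric] power_mult[symmetric] algebra_simps)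
  also have "\<dots> = (\<sigma>^2)^n * \<sigma>^l" by (simp add: power_add power_mult)
  finally show ?thesis using assms by simp
qed

lemma qpow_key:
  assumes "(\<sigma>::real)^2 = 1" "l \<le> n"
  shows "(\<sigma> * norm u)^(2*n - l) *\<^sub>R qpow u l = (norm u)^(2*n) *\<^sub>R qpow (\<sigma> *\<^sub>R (u /\<^sub>R norm u)) l"
proof (cases "u = 0")
  case True
  show ?thesis
  proof (cases "n = 0")
    case True with assms \<open>u = 0\<close> show ?thesis by simp
  next
    case False
    then have "2*n - l > 0" using assms by simp
    moreover have "(0::real)^(2*n) = 0" using False by simp
    ultimately show ?thesis using \<open>u = 0\<close> False by (simp add: zero_power)
  qed
next
  case False
  define r where "r = norm u"
  have r: "r > 0" using False unfolding r_def by simp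
  define x where "x = u /\<^sub>R r"
  have u: "u = r *\<^sub>R x" unfolding x_def using r by simp
  have "(\<sigma> * r)^(2*n - l) *\<^sub>R qpow u l = ((\<sigma> * r)^(2*n - l) * r^l) *\<^sub>R qpow x l"
    unfolding u qpow_scaleR by simp
  also have "(\<sigma> * r)^(2*n - l) * r^l = r^(2*n) * \<sigma>^l"
  proof -
    have "(\<sigma> * r)^(2*n - l) * r^l = \<sigma>^(2*n-l) * (r^(2*n-l) * r^l)" by (simp add: power_mult_distrib)
    also have "r^(2*n-l) * r^l = r^(2*n)" using assms(2) by (simp add: power_add[symmetric])
    also have "\<sigma>^(2*n-l) = \<sigma>^l" using assms by (intro sigma_pow) auto
    finally show ?thesis by simp
  qed
  finally show ?thesis unfolding r_def[symmetric] x_def[symmetric] qpow_scaleR by simp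
qed

lemma scal2: "(c1 * c2) *\<^sub>R qmult (qmult A B) x = qmult (qmult (c1 *\<^sub>R A) (c2 *\<^sub>R B)) x"
  by (simp add: qmult_scaleR_left qmult_scaleR_right)

lemma Phi_eq:
  assumes "(\<sigma>::real)^2 = 1" "(\<tau>::real)^2 = 1"
  shows "Phi n a (ext w (\<sigma> * rho1 w) (\<tau> * rho2 w)) = rho1 w^(4*n) * rho2 w^(4*n) *
     (norm (qpoly2 n a (\<sigma> *\<^sub>R (cU w /\<^sub>R rho1 w)) (\<tau> *\<^sub>R (cV w /\<^sub>R rho2 w))))^2"
proof -
  let ?u = "cU w" and ?v = "cV w"
  have "(\<Sum>l1\<le>n. \<Sum>l2\<le>n. ((\<sigma> * norm ?u) ^ (2*n - l1) * (\<tau> * norm ?v) ^ (2*n - l2)) *\<^sub>R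
      qmult (qmult (qpow ?u l1) (qpow ?v l2)) (a l1 l2)) =
      (norm ?u^(2*n) * norm ?v^(2*n)) *\<^sub>R qpoly2 n a (\<sigma> *\<^sub>R (?u /\<^sub>R norm ?u)) (\<tau> *\<^sub>R (?v /\<^sub>R norm ?v))"
    unfolding qpoly2_def scaleR_sum_right
  proof (intro sum.cong refl)
    fix l1 l2 assume "l1 \<in> {..n}" "l2 \<in> {..n}"
    then show "((\<sigma> * norm ?u) ^ (2*n - l1) * (\<tau> * norm ?v) ^ (2*n - l2)) *\<^sub>R
      qmult (qmult (qpow ?u l1) (qpow ?v l2)) (a l1 l2) =
      (norm ?u^(2*n) * norm ?v^(2*n)) *\<^sub>R qmult (qmult (qpow (\<sigma> *\<^sub>R (?u /\<^sub>R norm ?u)) l1) (qpow (\<tau> *\<^sub>R (?v /\<^sub>R norm ?v)) l2)) (a l1 l2)"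
      unfolding scal2 using qpow_key[OF assms(1), of l1 n ?u] qpow_key[OF assms(2), of l2 n ?v] by simp
  qed
  then show ?thesis unfolding Phi_def rho1_def rho2_def ext_simps
    by (simp add: power_mult_distrib power_mult[symmetric] mult_ac)
qed

lemma cU_inner: "cU (\<lambda>b. z \<bullet> b) = fst z"
  by (simp add: cU_def vec_eq_iff inner_Pair_0 inner_axis)
lemma cV_inner: "cV (\<lambda>b. z \<bullet> b) = snd z"
  by (simp add: cV_def vec_eq_iff inner_Pair_0 inner_axis)

lemma norm_dir_le: "norm (\<sigma> *\<^sub>R (u /\<^sub>R norm u)) \<le> 1" if "\<sigma> \<in> {1, -1::real}" for u :: "'a::real_normed_vector"
  using that by (cases "u = 0") auto

lemma ennreal_max0: "ennreal (max 0 x) = ennreal x"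
  by (cases "x \<ge> 0") (auto simp: ennreal_neg max_def)

lemma pointwise:
  fixes u v :: "real^4"
  assumes hq: "\<forall>w. q w = Phi n a (ext w (rho1 w) (rho2 w)) * Phi n a (ext w (- rho1 w) (rho2 w)) *
     Phi n a (ext w (rho1 w) (- rho2 w)) * Phi n a (ext w (- rho1 w) (- rho2 w))"
    and nu: "norm u \<le> 1" and nv: "norm v \<le> 1"
  shows "ennreal \<bar>ln (norm (qpoly2 n a (u /\<^sub>R norm u) (v /\<^sub>R norm v)))\<bar>
     \<le> ennreal (4 * ln (1 + (\<Sum>l1\<le>n. \<Sum>l2\<le>n. norm (a l1 l2)))) + nL (q (\<lambda>b. (u,v) \<bullet> b))"
proof -
  define w where "w = (\<lambda>b. (u,v) \<bullet> b)"
  define B0 where "B0 = (\<Sum>l1\<le>n. \<Sum>l2\<le>n. norm (a l1 l2))"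
  define A where "A = 1 + B0"
  define P where "P \<sigma> \<tau> = norm (qpoly2 n a (\<sigma> *\<^sub>R (u /\<^sub>R norm u)) (\<tau> *\<^sub>R (v /\<^sub>R norm v)))" for \<sigma> \<tau> :: real
  define c where "c = norm u^(4*n) * norm v^(4*n)"
  have B0: "B0 \<ge> 0" unfolding B0_def by (intro sum_nonneg) auto
  have A1: "A \<ge> 1" unfolding A_def using B0 by simp
  have Pb: "0 \<le> P \<sigma> \<tau>" "P \<sigma> \<tau> \<le> A" if "\<sigma> \<in> {1,-1}" "\<tau> \<in> {1,-1}" for \<sigma> \<tau>
  proof -
    have "P \<sigma> \<tau> \<le> B0"
      using norm_qpoly2_le[OF norm_dir_le[OF that(1), of u] norm_dir_le[OF that(2), of v], of n a]
      unfolding P_def B0_def .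
    then show "P \<sigma> \<tau> \<le> A" unfolding A_def by simp
  qed (simp add: P_def)
  have c01: "0 \<le> c" "c \<le> 1" unfolding c_def using nu nv
    by (auto intro!: mult_le_one power_le_one)
  have uw: "cU w = u" "cV w = v" "rho1 w = norm u" "rho2 w = norm v"
    unfolding w_def rho1_def rho2_def using cU_inner[of "(u,v)"] cV_inner[of "(u,v)"] by auto
  have Ph: "Phi n a (ext w (\<sigma> * norm u) (\<tau> * norm v)) = c * (P \<sigma> \<tau>)^2" if "\<sigma>^2 = 1" "\<tau>^2 = 1" for \<sigma> \<tau> :: real
    using Phi_eq[OF that, of n a w] unfolding uw P_def c_def by simp
  have qw: "q w = (c * (P 1 1)^2) * (c * (P (-1) 1)^2) * (c * (P 1 (-1))^2) * (c * (P (-1) (-1))^2)"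
    using hq[rule_format, of w] Ph[of 1 1] Ph[of "-1" 1] Ph[of 1 "-1"] Ph[of "-1" "-1"] by (simp add: uw)
  define t where "t = P 1 1"
  have t_eq: "t = norm (qpoly2 n a (u /\<^sub>R norm u) (v /\<^sub>R norm v))" unfolding t_def P_def by simp
  have q0: "q w \<ge> 0" unfolding qw using c01 by simp
  have qle: "q w \<le> t^2 * A^6"
  proof -
    have "q w = c^4 * (t^2 * ((P (-1) 1)^2 * ((P 1 (-1))^2 * (P (-1) (-1))^2)))"
      unfolding qw t_def by (simp add: algebra_simps power4_eq_xxxx)
    also have "\<dots> \<le> 1 * (t^2 * (A^2 * (A^2 * A^2)))"
      using c01 Pb by (intro mult_mono power_mono power_le_one) (auto simp: t_def)
    finally show ?thesis by (simp add: power_add[symmetric] algebra_simps)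
  qed
  have t0: "t \<ge> 0" "t \<le> A" using Pb[of 1 1] unfolding t_def by auto
  show ?thesis
  proof (cases "t = 0 \<or> q w = 0")
    case True
    then show ?thesis unfolding t_eq w_def[symmetric] by (auto simp: nL_def)
  next
    case False
    then have tp: "t > 0" and qp: "q w > 0" using t0 q0 by auto
    have lnA: "ln A \<ge> 0" using A1 by simp
    have "ln (q w) \<le> ln (t^2 * A^6)" using qle qp by simp
    also have "\<dots> = 2 * ln t + 6 * ln A" using tp A1 by (simp add: ln_mult ln_realpow)
    finally have lq: "ln (q w) \<le> 2 * ln t + 6 * ln A" .
    have "ln t \<le> ln A" using tp t0 by simp
    then have main: "\<bar>ln t\<bar> \<le> 4 * ln A + max 0 (- ln (q w))" using lq lnA by (auto simp: abs_if max_def)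
    have "ennreal \<bar>ln t\<bar> \<le> ennreal (4 * ln A + max 0 (- ln (q w)))" using main by (rule ennreal_leI)
    also have "\<dots> \<le> ennreal (4 * ln A) + ennreal (max 0 (- ln (q w)))" by (rule ennreal_add_le)
    also have "ennreal (max 0 (- ln (q w))) = nL (q w)" using qp by (simp add: ennreal_max0 nL_pos)
    finally show ?thesis unfolding t_eq w_def A_def B0_def .
  qed
qed

lemma pf_cont: "polyfun I q \<Longrightarrow> continuous_on S (\<lambda>z::'a::euclidean_space. q (\<lambda>b. z \<bullet> b))"
  by (induction rule: polyfun.induct) (auto intro!: continuous_intros)

lemma pf_borel: "polyfun I q \<Longrightarrow> (\<lambda>z::'a::euclidean_space. q (\<lambda>b. z \<bullet> b)) \<in> borel_measurable borel"
  by (rule borel_measurable_continuous_onI) (rule pf_cont)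

lemma meas_F[measurable]: "(\<lambda>p::qq. ln (norm (qpoly2 n a (fst p) (snd p)))) \<in> borel_measurable borel"
proof -
  have "(\<lambda>p::qq. qpoly2 n a (fst p) (snd p)) \<in> borel_measurable borel"
    by (rule borel_measurable_continuous_onI[OF continuous_qpoly2])
  then show ?thesis by measurable
qed

definition gdir :: "real^4 \<Rightarrow> real^4" where "gdir x = x /\<^sub>R norm x"

lemma gdir_meas[measurable]: "gdir \<in> borel_measurable borel"
  unfolding gdir_def by measurable

definition Ub :: "(real^4) measure" where "Ub = uniform_measure lborel (ball 0 1)"

lemma vol_pos: "emeasure lborel (ball (0::real^4) 1) \<noteq> 0"
proof -
  have "unit_ball_vol (real DIM(real^4)) > 0" by (rule unit_ball_vol_pos) simp
  moreover have "emeasure lborel (ball (0::real^4) 1) = ennreal (unit_ball_vol (real DIM(real^4)) * 1 ^ DIM(real^4))"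
    by (rule emeasure_ball) simp
  ultimately show ?thesis by (metis ennreal_eq_0_iff mult_1_right not_le power_one)
qed
lemma vol_fin: "emeasure lborel (ball (0::real^4) 1) \<noteq> \<infinity>"
  using emeasure_lborel_ball_finite[of "0::real^4" 1] by simp

lemma Ub_space: "emeasure Ub (space Ub) = 1"
proof -
  have "emeasure Ub (space Ub) = emeasure Ub (ball 0 1)"
    unfolding Ub_def by (simp add: emeasure_uniform_measure)
  also have "\<dots> = 1" unfolding Ub_def by (rule emeasure_uniform_measure_1[OF vol_pos vol_fin])
  finally show ?thesis .
qed

lemma sets_Ub [measurable_cong]: "sets Ub = sets borel"
  unfolding Ub_def by simp

lemma sphere_unif_eq: "sphere_unif = distr Ub borel gdir"
  unfolding sphere_unif_def Ub_def gdir_def ..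

lemma torusH_eq: "torusH = distr (Ub \<Otimes>\<^sub>M Ub) (borel \<Otimes>\<^sub>M borel) (\<lambda>(x, y). (gdir x, gdir y))"
proof -
  have g: "gdir \<in> measurable Ub borel" by (simp add: measurable_cong_sets[OF sets_Ub refl])
  have "emeasure (distr Ub borel gdir) (space (distr Ub borel gdir)) = emeasure Ub (space Ub)"
    using g by (simp add: emeasure_distr)
  then have "finite_measure (distr Ub borel gdir)" using Ub_space by (intro finite_measureI) simp
  then have "sigma_finite_measure (distr Ub borel gdir)" by (rule finite_measure.axioms(1))
  then show ?thesis unfolding torusH_def sphere_unif_eq by (rule pair_measure_distr[OF g g])
qed

abbreviation "vol \<equiv> emeasure lborel (ball (0::real^4) 1)"
definition dd :: "real^4 \<Rightarrow> ennreal" where "dd u = indicator (ball 0 1) u / vol"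

lemma dd_meas[measurable]: "dd \<in> borel_measurable borel"
  unfolding dd_def by (intro borel_measurable_divide_ennreal borel_measurable_indicator measurable_const) auto

lemma fst_meas: "(fst :: qq \<Rightarrow> real^4) \<in> borel \<rightarrow>\<^sub>M borel"
  by (rule borel_measurable_continuous_onI) (intro continuous_intros)
lemma snd_meas: "(snd :: qq \<Rightarrow> real^4) \<in> borel \<rightarrow>\<^sub>M borel"
  by (rule borel_measurable_continuous_onI) (intro continuous_intros)

lemma gg_meas: "(\<lambda>z::qq. (gdir (fst z), gdir (snd z))) \<in> borel \<rightarrow>\<^sub>M borel"
proof -
  have "(\<lambda>z::qq. (gdir (fst z), gdir (snd z))) \<in> borel \<rightarrow>\<^sub>M borel \<Otimes>\<^sub>M borel"
    by (intro measurable_Pair measurable_compose[OF fst_meas gdir_meas] measurable_compose[OF snd_meas gdir_meas])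
  then show ?thesis unfolding borel_prod .
qed

lemma H_meas: "(\<lambda>p::qq. ennreal (norm (ln (norm (qpoly2 n a (fst p) (snd p)))))) \<in> borel \<rightarrow>\<^sub>M borel"
  by measurable

lemma HG_meas: "(\<lambda>z::qq. ennreal (norm (ln (norm (qpoly2 n a (gdir (fst z)) (gdir (snd z))))))) \<in> borel \<rightarrow>\<^sub>M borel"
  using measurable_compose[OF gg_meas H_meas[of n a]] by simp

lemma ddd_meas: "(\<lambda>z::qq. dd (fst z) * dd (snd z)) \<in> borel \<rightarrow>\<^sub>M borel"
  by (intro borel_measurable_times_ennreal measurable_compose[OF fst_meas dd_meas] measurable_compose[OF snd_meas dd_meas])

lemma Ub_density: "Ub = density lborel dd"
  unfolding Ub_def uniform_measure_def dd_def ..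

lemma Ub_prod: "Ub \<Otimes>\<^sub>M Ub = density lborel (\<lambda>(x,y). dd x * dd y)"
proof -
  have "finite_measure Ub" using Ub_space by (intro finite_measureI) simp
  then have sf: "sigma_finite_measure (density lborel dd)" unfolding Ub_density by (rule finite_measure.axioms(1))
  have "Ub \<Otimes>\<^sub>M Ub = density (lborel \<Otimes>\<^sub>M lborel) (\<lambda>(x,y). dd x * dd y)"
    unfolding Ub_density by (rule pair_measure_density) (use sf in \<open>auto intro: lborel.sigma_finite_measure_axioms\<close>)
  then show ?thesis by (simp add: lborel_prod)
qed

lemma int_torus:
  "(\<integral>\<^sup>+p. ennreal (norm (ln (norm (qpoly2 n a (fst p) (snd p))))) \<partial>torusH) =
   (\<integral>\<^sup>+z. dd (fst z) * dd (snd z) * ennreal (norm (ln (norm (qpoly2 n a (gdir (fst z)) (gdir (snd z)))))) \<partial>lborel)"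
proof -
  have T: "(\<lambda>(x, y). (gdir x, gdir y)) \<in> measurable (Ub \<Otimes>\<^sub>M Ub) (borel \<Otimes>\<^sub>M borel)"
    by (simp add: measurable_cong_sets[OF sets_pair_measure_cong[OF sets_Ub sets_Ub] refl])
  have Gm: "(\<lambda>p. ennreal (norm (ln (norm (qpoly2 n a (fst p) (snd p)))))) \<in> borel_measurable (borel \<Otimes>\<^sub>M borel)"
    unfolding borel_prod by measurable
  have "(\<integral>\<^sup>+p. ennreal (norm (ln (norm (qpoly2 n a (fst p) (snd p))))) \<partial>torusH) =
     (\<integral>\<^sup>+z. ennreal (norm (ln (norm (qpoly2 n a (fst ((\<lambda>(x, y). (gdir x, gdir y)) z)) (snd ((\<lambda>(x, y). (gdir x, gdir y)) z)))))) \<partial>(Ub \<Otimes>\<^sub>M Ub))"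
    unfolding torusH_eq by (rule nn_integral_distr[OF T]) (use Gm in simp)
  also have "\<dots> = (\<integral>\<^sup>+z. ennreal (norm (ln (norm (qpoly2 n a (gdir (fst z)) (gdir (snd z)))))) \<partial>(Ub \<Otimes>\<^sub>M Ub))"
    by (simp add: case_prod_beta)
  also have "\<dots> = (\<integral>\<^sup>+z. (\<lambda>(x,y). dd x * dd y) z * ennreal (norm (ln (norm (qpoly2 n a (gdir (fst z)) (gdir (snd z)))))) \<partial>lborel)"
    unfolding Ub_prod by (rule nn_integral_density) (use ddd_meas HG_meas in \<open>auto simp: case_prod_beta\<close>)
  also have "\<dots> = (\<integral>\<^sup>+z. dd (fst z) * dd (snd z) * ennreal (norm (ln (norm (qpoly2 n a (gdir (fst z)) (gdir (snd z)))))) \<partial>lborel)"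
    by (simp add: case_prod_beta)
  finally show ?thesis .
qed

lemma cube_ind_one:
  fixes z :: qq
  assumes "norm (fst z) < 1" "norm (snd z) < 1"
  shows "(\<Prod>b\<in>Basis. indicator {-1..1::real} (z \<bullet> b) :: ennreal) = 1"
proof (rule prod.neutral, rule ballI)
  fix b :: qq assume b: "b \<in> Basis"
  have "\<bar>z \<bullet> b\<bar> \<le> 1"
  proof -
    from b consider e where "e \<in> Basis" "b = (e, 0)" | e where "e \<in> Basis" "b = (0, e)"
      unfolding Basis_prod_def by auto
    then show ?thesis
    proof cases
      case 1 then have "\<bar>z \<bullet> b\<bar> = \<bar>fst z \<bullet> e\<bar>" by (simp add: inner_Pair_0)
      also have "\<dots> \<le> norm (fst z)" using 1(1) by (rule Basis_le_norm)
      finally show ?thesis using assms by simp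
    next
      case 2 then have "\<bar>z \<bullet> b\<bar> = \<bar>snd z \<bullet> e\<bar>" by (simp add: inner_Pair_0)
      also have "\<dots> \<le> norm (snd z)" using 2(1) by (rule Basis_le_norm)
      finally show ?thesis using assms by simp
    qed
  qed
  then show "indicator {-1..1::real} (z \<bullet> b) = (1::ennreal)" by (auto simp: indicator_def)
qed

lemma sum_basis_inner: "b \<in> Basis \<Longrightarrow> (\<Sum>b'\<in>Basis. f b' *\<^sub>R b') \<bullet> b = f b"
  for b :: "'a::euclidean_space"
  by (simp add: inner_sum_left inner_Basis if_distrib cong: if_cong)

lemma torus_bound:
  assumes pq: "polyfun Basis q"
    and hq: "\<forall>w. q w = Phi n a (ext w (rho1 w) (rho2 w)) * Phi n a (ext w (- rho1 w) (rho2 w)) *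
     Phi n a (ext w (rho1 w) (- rho2 w)) * Phi n a (ext w (- rho1 w) (- rho2 w))"
    and fin: "(\<integral>\<^sup>+f. nL (q f) * (\<Prod>b\<in>(Basis::qq set). indicator {-1..1::real} (f b)) \<partial>PiM (Basis::qq set) (\<lambda>_. lborel)) < \<infinity>"
  shows "(\<integral>\<^sup>+p. ennreal (norm (ln (norm (qpoly2 n a (fst p) (snd p))))) \<partial>torusH) < \<infinity>"
proof -
  define K where "K = 4 * ln (1 + (\<Sum>l1\<le>n. \<Sum>l2\<le>n. norm (a l1 l2)))"
  define c where "c = inverse vol"
  define \<Phi> where "\<Phi> z = (ennreal K + nL (q (\<lambda>b. z \<bullet> b))) * (\<Prod>b\<in>(Basis::qq set). indicator {-1..1::real} (z \<bullet> b))" for z :: qq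
  have \<Phi>m: "\<Phi> \<in> borel_measurable borel"
  proof -
    have "(\<lambda>z::qq. q (\<lambda>b. z \<bullet> b)) \<in> borel_measurable borel" by (rule pf_borel[OF pq])
    then show ?thesis unfolding \<Phi>_def by measurable
  qed
  have pw: "dd (fst z) * dd (snd z) * ennreal (norm (ln (norm (qpoly2 n a (gdir (fst z)) (gdir (snd z)))))) \<le> (c * c) * \<Phi> z" for z :: qq
  proof (cases "fst z \<in> ball 0 1 \<and> snd z \<in> ball 0 1")
    case False then show ?thesis by (auto simp: dd_def)
  next
    case True
    then have n1: "norm (fst z) < 1" "norm (snd z) < 1" by auto
    have "dd (fst z) = c" "dd (snd z) = c" using True by (auto simp: dd_def c_def divide_ennreal_def)
    moreover have "ennreal (norm (ln (norm (qpoly2 n a (gdir (fst z)) (gdir (snd z)))))) \<le> \<Phi> z"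
      using pointwise[OF hq, of "fst z" "snd z"] n1 cube_ind_one[OF n1]
      unfolding \<Phi>_def K_def gdir_def by simp
    ultimately show ?thesis by (simp add: mult.assoc mult_left_mono)
  qed
  have "(\<integral>\<^sup>+p. ennreal (norm (ln (norm (qpoly2 n a (fst p) (snd p))))) \<partial>torusH)
      \<le> (\<integral>\<^sup>+z. (c * c) * \<Phi> z \<partial>lborel)"
    unfolding int_torus by (rule nn_integral_mono) (rule pw)
  also have "\<dots> = (c * c) * (\<integral>\<^sup>+z. \<Phi> z \<partial>lborel)"
    by (rule nn_integral_cmult) (use \<Phi>m in simp)
  also have "(\<integral>\<^sup>+z. \<Phi> z \<partial>lborel) = (\<integral>\<^sup>+f. \<Phi> (\<Sum>b\<in>Basis. f b *\<^sub>R b) \<partial>PiM (Basis::qq set) (\<lambda>_. lborel))"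
  proof -
    have m: "(\<lambda>f. \<Sum>b\<in>Basis. f b *\<^sub>R b) \<in> measurable (PiM (Basis::qq set) (\<lambda>_. lborel)) (borel :: qq measure)"
      by measurable
    show ?thesis by (subst lborel_eq) (rule nn_integral_distr[OF m], use \<Phi>m in simp)
  qed
  also have "\<dots> = (\<integral>\<^sup>+f. ennreal K * (\<Prod>b\<in>(Basis::qq set). indicator {-1..1::real} (f b)) +
      nL (q f) * (\<Prod>b\<in>(Basis::qq set). indicator {-1..1::real} (f b)) \<partial>PiM (Basis::qq set) (\<lambda>_. lborel))"
  proof (rule nn_integral_cong)
    fix f :: "qq \<Rightarrow> real"
    have i: "(\<lambda>b. (\<Sum>b'\<in>Basis. f b' *\<^sub>R b') \<bullet> b) b = f b" if "b \<in> Basis" for b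
      using sum_basis_inner[OF that] by simp
    have "q (\<lambda>b. (\<Sum>b'\<in>Basis. f b' *\<^sub>R b') \<bullet> b) = q f"
      using pf_local[OF pq] i by blast
    moreover have "(\<Prod>b\<in>(Basis::qq set). indicator {-1..1::real} ((\<Sum>b'\<in>Basis. f b' *\<^sub>R b') \<bullet> b)) =
        (\<Prod>b\<in>(Basis::qq set). indicator {-1..1::real} (f b) :: ennreal)"
      using i by (intro prod.cong) auto
    ultimately show "\<Phi> (\<Sum>b\<in>Basis. f b *\<^sub>R b) = ennreal K * (\<Prod>b\<in>(Basis::qq set). indicator {-1..1::real} (f b)) +
      nL (q f) * (\<Prod>b\<in>(Basis::qq set). indicator {-1..1::real} (f b))"
      unfolding \<Phi>_def by (simp add: distrib_right)
  qed
  also have "\<dots> = ennreal K * (\<integral>\<^sup>+f. (\<Prod>b\<in>(Basis::qq set). indicator {-1..1::real} (f b)) \<partial>PiM (Basis::qq set) (\<lambda>_. lborel)) +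
      (\<integral>\<^sup>+f. nL (q f) * (\<Prod>b\<in>(Basis::qq set). indicator {-1..1::real} (f b)) \<partial>PiM (Basis::qq set) (\<lambda>_. lborel))"
  proof -
    have qm: "q \<in> borel_measurable (PiM (Basis::qq set) (\<lambda>_. lborel))" by (rule pf_measurable[OF pq])
    have pm: "(\<lambda>f. \<Prod>b\<in>Basis. indicator {-1..1::real} (f b) :: ennreal) \<in> borel_measurable (PiM (Basis::qq set) (\<lambda>_. lborel))"
      by (rule prod_ind_measurable) simp
    have "(\<integral>\<^sup>+f. ennreal K * (\<Prod>b\<in>(Basis::qq set). indicator {-1..1::real} (f b)) +
      nL (q f) * (\<Prod>b\<in>(Basis::qq set). indicator {-1..1::real} (f b)) \<partial>PiM (Basis::qq set) (\<lambda>_. lborel)) =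
      (\<integral>\<^sup>+f. ennreal K * (\<Prod>b\<in>(Basis::qq set). indicator {-1..1::real} (f b)) \<partial>PiM (Basis::qq set) (\<lambda>_. lborel)) +
      (\<integral>\<^sup>+f. nL (q f) * (\<Prod>b\<in>(Basis::qq set). indicator {-1..1::real} (f b)) \<partial>PiM (Basis::qq set) (\<lambda>_. lborel))"
      by (rule nn_integral_add) (use qm pm in auto)
    moreover have "(\<integral>\<^sup>+f. ennreal K * (\<Prod>b\<in>(Basis::qq set). indicator {-1..1::real} (f b)) \<partial>PiM (Basis::qq set) (\<lambda>_. lborel)) =
       ennreal K * (\<integral>\<^sup>+f. (\<Prod>b\<in>(Basis::qq set). indicator {-1..1::real} (f b)) \<partial>PiM (Basis::qq set) (\<lambda>_. lborel))"
      by (rule nn_integral_cmult) (use pm in auto)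
    ultimately show ?thesis by simp
  qed
  also have "(\<integral>\<^sup>+f. (\<Prod>b\<in>(Basis::qq set). indicator {-1..1::real} (f b)) \<partial>PiM (Basis::qq set) (\<lambda>_. lborel)) = (\<Prod>b\<in>(Basis::qq set). 2)"
  proof -
    interpret product_sigma_finite "\<lambda>_::qq. lborel :: real measure" by standard
    have "(\<integral>\<^sup>+f. (\<Prod>b\<in>(Basis::qq set). indicator {-1..1::real} (f b)) \<partial>PiM (Basis::qq set) (\<lambda>_. lborel)) =
        (\<Prod>b\<in>(Basis::qq set). (\<integral>\<^sup>+y. indicator {-1..1::real} y \<partial>lborel))"
      by (rule product_nn_integral_prod) auto
    then show ?thesis by simp
  qed
  also have "(c * c) * (ennreal K * (\<Prod>b\<in>(Basis::qq set). 2) + (\<integral>\<^sup>+f. nL (q f) * (\<Prod>b\<in>(Basis::qq set). indicator {-1..1::real} (f b)) \<partial>PiM (Basis::qq set) (\<lambda>_. lborel))) < \<infinity>"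
  proof -
    have "vol < top" using vol_fin by (simp add: less_top)
    then obtain r where r: "vol = ennreal r" "r \<ge> 0" by (cases vol) auto
    then have "r > 0" using vol_pos by (cases "r = 0") auto
    then have "c < \<infinity>" unfolding c_def r(1) by (simp add: inverse_ennreal)
    moreover have "(\<Prod>b\<in>(Basis::qq set). 2::ennreal) < \<infinity>" by (simp add: less_top[symmetric])
    ultimately show ?thesis using fin
      by (simp add: ennreal_mult_less_top less_top[symmetric] ennreal_mult_eq_top_iff)
  qed
  finally show ?thesis .
qed

lemma sets_torusH: "sets torusH = sets (borel :: qq measure)"
proof -
  have "sets torusH = sets (borel \<Otimes>\<^sub>M borel :: qq measure)"
    unfolding torusH_eq by simp
  then show ?thesis unfolding borel_prod .
qed

theorem theorem7p1:
  fixes n :: nat and a :: "nat \<Rightarrow> nat \<Rightarrow> real^4"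
  assumes "\<exists>l1\<le>n. \<exists>l2\<le>n. a l1 l2 \<noteq> 0"
  shows "integrable torusH (\<lambda>(x, y). ln (norm (qpoly2 n a x y)))"
proof -
  obtain q where pq: "polyfun Basis q" and hq: "\<forall>w. q w = Phi n a (ext w (rho1 w) (rho2 w)) * Phi n a (ext w (- rho1 w) (rho2 w)) *
     Phi n a (ext w (rho1 w) (- rho2 w)) * Phi n a (ext w (- rho1 w) (- rho2 w))"
    using exists_q[of n a] by blast
  obtain z w where zw: "cmod z = 1" "cmod w = 1"
    "\<forall>\<sigma>\<in>{1,-1::real}. \<forall>\<tau>\<in>{1,-1::real}. qpoly2 n a (\<sigma> *\<^sub>R emb z) (\<tau> *\<^sub>R emb w) \<noteq> 0"
    using nonvanishing_point[OF assms] by blast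
  define z0 :: qq where "z0 = (emb z, emb w)"
  define f0 where "f0 = (\<lambda>b. z0 \<bullet> b)"
  have n0: "norm (fst z0) = 1" "norm (snd z0) = 1" unfolding z0_def using zw by (simp_all add: norm_emb)
  have cube: "\<forall>k\<in>Basis. f0 k \<in> {-1..1}"
  proof
    fix b :: qq assume b: "b \<in> Basis"
    from b consider e where "e \<in> Basis" "b = (e, 0)" | e where "e \<in> Basis" "b = (0, e)"
      unfolding Basis_prod_def by auto
    then have "\<bar>z0 \<bullet> b\<bar> \<le> 1"
    proof cases
      case 1 then have "\<bar>z0 \<bullet> b\<bar> = \<bar>fst z0 \<bullet> e\<bar>" by (simp add: inner_Pair_0)
      also have "\<dots> \<le> norm (fst z0)" using 1(1) by (rule Basis_le_norm)
      finally show ?thesis using n0 by simp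
    next
      case 2 then have "\<bar>z0 \<bullet> b\<bar> = \<bar>snd z0 \<bullet> e\<bar>" by (simp add: inner_Pair_0)
      also have "\<dots> \<le> norm (snd z0)" using 2(1) by (rule Basis_le_norm)
      finally show ?thesis using n0 by simp
    qed
    then show "f0 b \<in> {-1..1}" unfolding f0_def by auto
  qed
  have uw: "cU f0 = emb z" "cV f0 = emb w" "rho1 f0 = 1" "rho2 f0 = 1"
    unfolding f0_def rho1_def rho2_def using cU_inner[of z0] cV_inner[of z0] n0 by (auto simp: z0_def)
  have Pn: "Phi n a (ext f0 (\<sigma> * rho1 f0) (\<tau> * rho2 f0)) \<noteq> 0" if "\<sigma> \<in> {1,-1::real}" "\<tau> \<in> {1,-1::real}" for \<sigma> \<tau>
  proof -
    have s: "\<sigma>^2 = 1" "\<tau>^2 = 1" using that by auto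
    have "Phi n a (ext f0 (\<sigma> * rho1 f0) (\<tau> * rho2 f0)) = rho1 f0^(4*n) * rho2 f0^(4*n) *
     (norm (qpoly2 n a (\<sigma> *\<^sub>R (cU f0 /\<^sub>R rho1 f0)) (\<tau> *\<^sub>R (cV f0 /\<^sub>R rho2 f0))))^2"
      by (rule Phi_eq[OF s])
    also have "\<dots> = (norm (qpoly2 n a (\<sigma> *\<^sub>R emb z) (\<tau> *\<^sub>R emb w)))^2" unfolding uw by simp
    moreover have "qpoly2 n a (\<sigma> *\<^sub>R emb z) (\<tau> *\<^sub>R emb w) \<noteq> 0" using zw(3) that by blast
    ultimately show ?thesis by simp
  qed
  have qf0: "q f0 \<noteq> 0"
    using hq[rule_format, of f0] Pn[of 1 1] Pn[of "-1" 1] Pn[of 1 "-1"] Pn[of "-1" "-1"] by simp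
  have fin: "(\<integral>\<^sup>+f. nL (q f) * (\<Prod>b\<in>(Basis::qq set). indicator {-1..1::real} (f b)) \<partial>PiM (Basis::qq set) (\<lambda>_. lborel)) < \<infinity>"
    by (rule main_int[OF finite_Basis pq cube qf0])
  have bd: "(\<integral>\<^sup>+p. ennreal (norm (ln (norm (qpoly2 n a (fst p) (snd p))))) \<partial>torusH) < \<infinity>"
    by (rule torus_bound[OF pq hq fin])
  have meas: "(\<lambda>(x, y). ln (norm (qpoly2 n a x y))) \<in> borel_measurable torusH"
    unfolding measurable_cong_sets[OF sets_torusH refl] case_prod_beta by (rule meas_F)
  show ?thesis
    by (rule integrableI_bounded[OF meas]) (use bd in \<open>simp add: case_prod_beta\<close>)
qed


end
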